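(* Let $G=(V,E)$ be a connected graph, let $T$ be a spanning tree of $G$ rooted at $s$ which is an $\mathcal L$-tree of some DFS on $G$, and let $\rho$ be an arbitrary vertex order of $V$ ending in $s$. Let $\sigma$ be the order output by Ordering$(G,T,s,\rho)$. Then $T$ is an $\mathcal L$-tree of LexDFS rooted in $s$ if and only if $\sigma$ is a LexDFS order of $G$.
   Context: Graphs are finite, simple, undirected; $n=|V|$, $N(v)$ is the neighborhood of $v$. A vertex order is a linear order $\sigma=(v_1,\dots,v_n)$ of $V$; $\sigma(i)=v_i$; $u\prec_\sigma v$ means $u$ appears before $v$; $\sigma^-$ is the reverse order. DFS: a search that starts at a vertex and repeatedly visits an unvisited neighbor of the most recently visited vertex that still has an unvisited neighbor; a DFS order is any resulting order. DFS$^+(\tau)$ on a graph $H$: the DFS of $H$ starting at the last vertex of $\tau$ that, whenever several vertices may be visited next, visits the one rightmost in $\tau$. LexDFS started at $s$: label $s$ with $(0)$, all others with the empty label; for $i=1,\dots,n$ pick an unnumbered vertex $v$ with lexicographically largest label, set $\sigma(i)=v$, and prepend $i$ to the label of each unnumbered neighbor of $v$; a LexDFS order is any possible output. $\mathcal L$-tree of a vertex order $(v_1,\dots,v_n)$ of a connected graph: the spanning tree rooted at $v_1$ with an edge from each $v_i$ ($i>1$) to its rightmost neighbor $v_j$ with $j<i$. A rooted spanning tree $T$ (root $s$) is an $\mathcal L$-tree of a search $\mathcal P$ on $G$ if some $\mathcal P$-order of $G$ starting at $s$ has $\mathcal L$-tree $T$ (same edges and same root). Partition refinement: refining an ordered partition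 $(Q_1,\dots,Q_k)$ of $V$ with $S'\subseteq V$ replaces each $Q_i$ by $(Q_i\cap S',\,Q_i\setminus S')$ whenever both are nonempty. Procedure Ordering$(G,T,s,\rho)$: let $\beta$ be the reverse of a BFS order of $T$ starting at $s$; set $\mathcal Q=(V)$; for $i=1,\dots,n$, with $v=\beta(i)$, refine $\mathcal Q$ with $\{w\in N(v): w\prec_\beta v\}$; then order the vertices inside each class of $\mathcal Q$ according to $\rho^-$ and move the class $\{s\}$ to the leftmost position; let $\tau$ be the reverse of the resulting order of all vertices; output $\sigma=$ DFS$^+(\tau)$ on $T$. *)

theory Defs
  imports Main
begin

definition graph :: "'a set \<Rightarrow> ('a \<Rightarrow> 'a \<Rightarrow> bool) \<Rightarrow> bool" where
  "graph V E \<longleftrightarrow> finite V \<and> (\<forall>x y. E x y \<longrightarrow> x \<in> V \<and> y \<in> V \<and> x \<noteq> y \<and> E y x)"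

definition connected :: "'a set \<Rightarrow> ('a \<Rightarrow> 'a \<Rightarrow> bool) \<Rightarrow> bool" where
  "connected V E \<longleftrightarrow> (\<forall>x\<in>V. \<forall>y\<in>V. (x, y) \<in> {(a, b). E a b}\<^sup>*)"

definition is_vorder :: "'a set \<Rightarrow> 'a list \<Rightarrow> bool" where
  "is_vorder V \<sigma> \<longleftrightarrow> distinct \<sigma> \<and> set \<sigma> = V"

definition prec :: "'a list \<Rightarrow> 'a \<Rightarrow> 'a \<Rightarrow> bool" where
  "prec xs x y \<longleftrightarrow> (\<exists>i j. i < j \<and> j < length xs \<and> xs ! i = x \<and> xs ! j = y)"

text \<open>DFS order starting at s: each vertex after the first is an unvisited neighbour of the
  most recently visited vertex that still has an unvisited neighbour.\<close>

definition dfs_order :: "'a set \<Rightarrow> ('a \<Rightarrow> 'a \<Rightarrow> bool) \<Rightarrow> 'a \<Rightarrow> 'a list \<Rightarrow> bool" where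
  "dfs_order V E s \<sigma> \<longleftrightarrow> is_vorder V \<sigma> \<and> \<sigma> \<noteq> [] \<and> hd \<sigma> = s \<and>
     (\<forall>i. 0 < i \<and> i < length \<sigma> \<longrightarrow>
        (\<exists>j<i. E (\<sigma> ! j) (\<sigma> ! i) \<and>
           (\<forall>k. j < k \<and> k < i \<longrightarrow> {w. E (\<sigma> ! k) w} \<subseteq> set (take i \<sigma>))))"

text \<open>BFS order starting at s: each vertex after the first is an unvisited neighbour of the
  earliest visited vertex that still has an unvisited neighbour.\<close>

definition bfs_order :: "'a set \<Rightarrow> ('a \<Rightarrow> 'a \<Rightarrow> bool) \<Rightarrow> 'a \<Rightarrow> 'a list \<Rightarrow> bool" where
  "bfs_order V E s \<sigma> \<longleftrightarrow> is_vorder V \<sigma> \<and> \<sigma> \<noteq> [] \<and> hd \<sigma> = s \<and>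
     (\<forall>i. 0 < i \<and> i < length \<sigma> \<longrightarrow>
        (\<exists>j<i. E (\<sigma> ! j) (\<sigma> ! i) \<and>
           (\<forall>k. k < j \<longrightarrow> {w. E (\<sigma> ! k) w} \<subseteq> set (take i \<sigma>))))"

text \<open>DFS+(tau) on the graph (V,E): the DFS started at the last vertex of tau which, among all
  candidates (unvisited neighbours of the current vertex), visits the one rightmost in tau.\<close>

definition dfs_plus :: "'a set \<Rightarrow> ('a \<Rightarrow> 'a \<Rightarrow> bool) \<Rightarrow> 'a list \<Rightarrow> 'a list \<Rightarrow> bool" where
  "dfs_plus V E \<tau> \<sigma> \<longleftrightarrow> \<tau> \<noteq> [] \<and> dfs_order V E (last \<tau>) \<sigma> \<and>
     (\<forall>i j w. 0 < i \<and> i < length \<sigma> \<and> j < i \<and> E (\<sigma> ! j) (\<sigma> ! i) \<and>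
        (\<forall>k. j < k \<and> k < i \<longrightarrow> {w. E (\<sigma> ! k) w} \<subseteq> set (take i \<sigma>)) \<and>
        E (\<sigma> ! j) w \<and> w \<notin> set (take i \<sigma>)
        \<longrightarrow> w = \<sigma> ! i \<or> prec \<tau> w (\<sigma> ! i))"

text \<open>Position p (0-based) of the list carries the number p+1. The label of v just before
  the (i+1)-th vertex is chosen is the list of numbers of its already numbered neighbours, the
  latest first (each new number is prepended), with the initial entry 0 for the start vertex s.\<close>

definition lex_label :: "('a \<Rightarrow> 'a \<Rightarrow> bool) \<Rightarrow> 'a \<Rightarrow> 'a list \<Rightarrow> nat \<Rightarrow> 'a \<Rightarrow> nat list" where
  "lex_label E s \<sigma> i v =
     rev (map Suc (filter (\<lambda>p. E (\<sigma> ! p) v) [0..<i])) @ (if v = s then [0] else [])"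

definition lexdfs_order :: "'a set \<Rightarrow> ('a \<Rightarrow> 'a \<Rightarrow> bool) \<Rightarrow> 'a \<Rightarrow> 'a list \<Rightarrow> bool" where
  "lexdfs_order V E s \<sigma> \<longleftrightarrow> is_vorder V \<sigma> \<and>
     (\<forall>i < length \<sigma>. \<forall>w \<in> V - set (take i \<sigma>).
        (lex_label E s \<sigma> i (\<sigma> ! i), lex_label E s \<sigma> i w) \<notin> lexord {(a, b). a < (b::nat)})"

definition ltree_edge :: "('a \<Rightarrow> 'a \<Rightarrow> bool) \<Rightarrow> 'a list \<Rightarrow> 'a \<Rightarrow> 'a \<Rightarrow> bool" where
  "ltree_edge E \<sigma> x y \<longleftrightarrow> (\<exists>i < length \<sigma>. \<exists>j < i.
      ((x = \<sigma> ! i \<and> y = \<sigma> ! j) \<or> (x = \<sigma> ! j \<and> y = \<sigma> ! i)) \<and>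
      E (\<sigma> ! i) (\<sigma> ! j) \<and> (\<forall>k. j < k \<and> k < i \<longrightarrow> \<not> E (\<sigma> ! i) (\<sigma> ! k)))"

definition is_Ltree_DFS :: "'a set \<Rightarrow> ('a \<Rightarrow> 'a \<Rightarrow> bool) \<Rightarrow> ('a \<Rightarrow> 'a \<Rightarrow> bool) \<Rightarrow> 'a \<Rightarrow> bool" where
  "is_Ltree_DFS V E TE s \<longleftrightarrow> (\<exists>\<sigma>. dfs_order V E s \<sigma> \<and> ltree_edge E \<sigma> = TE)"

definition is_Ltree_LexDFS :: "'a set \<Rightarrow> ('a \<Rightarrow> 'a \<Rightarrow> bool) \<Rightarrow> ('a \<Rightarrow> 'a \<Rightarrow> bool) \<Rightarrow> 'a \<Rightarrow> bool" where
  "is_Ltree_LexDFS V E TE s \<longleftrightarrow> (\<exists>\<sigma>. lexdfs_order V E s \<sigma> \<and> ltree_edge E \<sigma> = TE)"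

definition refine :: "'a set list \<Rightarrow> 'a set \<Rightarrow> 'a set list" where
  "refine Qs S = concat (map (\<lambda>Q. if Q \<inter> S \<noteq> {} \<and> Q - S \<noteq> {} then [Q \<inter> S, Q - S] else [Q]) Qs)"

definition ordering_classes :: "'a set \<Rightarrow> ('a \<Rightarrow> 'a \<Rightarrow> bool) \<Rightarrow> 'a list \<Rightarrow> 'a set list" where
  "ordering_classes V E \<beta> = foldl (\<lambda>Qs v. refine Qs {w. E v w \<and> prec \<beta> w v}) [V] \<beta>"

definition ordering_seq :: "'a set \<Rightarrow> ('a \<Rightarrow> 'a \<Rightarrow> bool) \<Rightarrow> 'a \<Rightarrow> 'a list \<Rightarrow> 'a list \<Rightarrow> 'a list" where
  "ordering_seq V E s \<rho> \<beta> =
     (let Qs = ordering_classes V E \<beta>;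
          Qs' = filter (\<lambda>Q. s \<in> Q) Qs @ filter (\<lambda>Q. s \<notin> Q) Qs
      in concat (map (\<lambda>Q. filter (\<lambda>x. x \<in> Q) (rev \<rho>)) Qs'))"

definition ordering_output :: "'a set \<Rightarrow> ('a \<Rightarrow> 'a \<Rightarrow> bool) \<Rightarrow> ('a \<Rightarrow> 'a \<Rightarrow> bool) \<Rightarrow> 'a \<Rightarrow> 'a list \<Rightarrow> 'a list \<Rightarrow> bool" where
  "ordering_output V E TE s \<rho> \<sigma> \<longleftrightarrow>
     (\<exists>\<beta>. bfs_order V TE s (rev \<beta>) \<and> dfs_plus V TE (rev (ordering_seq V E s \<rho> \<beta>)) \<sigma>)"

end

theory Submission
  imports Defs
begin

lemma in_take_iff: "x \<in> set (take i xs) \<longleftrightarrow> (\<exists>k<i. k < length xs \<and> xs!k = x)"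
  by (auto simp: in_set_conv_nth)

lemma lab_bound: "\<forall>a\<in>set (rev (map Suc (filter P [0..<i]))). a \<le> i"
  by auto

lemma ex_Suc_shift:
  assumes "P i = Q (i::nat)"
  shows "(\<exists>k<Suc i. Q k \<and> \<not> P k \<and> (\<forall>m. k < m \<and> m < Suc i \<longrightarrow> (P m \<longleftrightarrow> Q m)))
     \<longleftrightarrow> (\<exists>k<i. Q k \<and> \<not> P k \<and> (\<forall>m. k < m \<and> m < i \<longrightarrow> (P m \<longleftrightarrow> Q m)))"
proof
  assume "\<exists>k<Suc i. Q k \<and> \<not> P k \<and> (\<forall>m. k < m \<and> m < Suc i \<longrightarrow> (P m \<longleftrightarrow> Q m))"
  then obtain k where k: "k < Suc i" "Q k" "\<not> P k" "\<forall>m. k < m \<and> m < Suc i \<longrightarrow> (P m \<longleftrightarrow> Q m)" by blast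
  have "k \<noteq> i" using k assms by blast
  then have "k < i" using k by simp
  then show "\<exists>k<i. Q k \<and> \<not> P k \<and> (\<forall>m. k < m \<and> m < i \<longrightarrow> (P m \<longleftrightarrow> Q m))"
    using k by (intro exI[of _ k]) simp
next
  assume "\<exists>k<i. Q k \<and> \<not> P k \<and> (\<forall>m. k < m \<and> m < i \<longrightarrow> (P m \<longleftrightarrow> Q m))"
  then obtain k where k: "k < i" "Q k" "\<not> P k" "\<forall>m. k < m \<and> m < i \<longrightarrow> (P m \<longleftrightarrow> Q m)" by blast
  have "\<forall>m. k < m \<and> m < Suc i \<longrightarrow> (P m \<longleftrightarrow> Q m)"
  proof (intro allI impI)
    fix m assume "k < m \<and> m < Suc i"
    then have "m < i \<or> m = i" by auto
    then show "P m \<longleftrightarrow> Q m" using k assms \<open>k < m \<and> m < Suc i\<close> by blast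
  qed
  then show "\<exists>k<Suc i. Q k \<and> \<not> P k \<and> (\<forall>m. k < m \<and> m < Suc i \<longrightarrow> (P m \<longleftrightarrow> Q m))"
    using k by (intro exI[of _ k]) simp
qed

lemma labX: "(rev (map Suc (filter P [0..<i])), rev (map Suc (filter Q [0..<i]))) \<in> lexord {(a,b). a < (b::nat)}
   \<longleftrightarrow> (\<exists>k<i. Q k \<and> \<not> P k \<and> (\<forall>m. k < m \<and> m < i \<longrightarrow> (P m \<longleftrightarrow> Q m)))"
proof (induction i)
  case 0
  then show ?case by simp
next
  case (Suc i)
  let ?A = "rev (map Suc (filter P [0..<i]))"
  let ?B = "rev (map Suc (filter Q [0..<i]))"
  have bA: "\<forall>a\<in>set ?A. a < Suc i" and bB: "\<forall>a\<in>set ?B. a < Suc i" by auto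
  have eA: "rev (map Suc (filter P [0..<Suc i])) = (if P i then Suc i # ?A else ?A)" by simp
  have eB: "rev (map Suc (filter Q [0..<Suc i])) = (if Q i then Suc i # ?B else ?B)" by simp
  show ?case
  proof (cases "P i")
    case Pi: True
    show ?thesis
    proof (cases "Q i")
      case True
      show ?thesis using Suc.IH Pi True eA eB ex_Suc_shift[of P i Q] by simp
    next
      case False
      have "(Suc i # ?A, ?B) \<notin> lexord {(a,b). a < (b::nat)}"
        using bB by (cases ?B) auto
      moreover have "\<not> (\<exists>k<Suc i. Q k \<and> \<not> P k \<and> (\<forall>m. k < m \<and> m < Suc i \<longrightarrow> (P m \<longleftrightarrow> Q m)))"
      proof
        assume "\<exists>k<Suc i. Q k \<and> \<not> P k \<and> (\<forall>m. k < m \<and> m < Suc i \<longrightarrow> (P m \<longleftrightarrow> Q m))"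
        then obtain k where k: "k < Suc i" "Q k" "\<not> P k" "\<forall>m. k < m \<and> m < Suc i \<longrightarrow> (P m \<longleftrightarrow> Q m)" by blast
        have "k \<noteq> i" using k Pi by blast
        then have "k < i" using k by simp
        then show False using k(4) Pi False by auto
      qed
      ultimately show ?thesis using Pi False eA eB by simp
    qed
  next
    case nPi: False
    show ?thesis
    proof (cases "Q i")
      case True
      have "(?A, Suc i # ?B) \<in> lexord {(a,b). a < (b::nat)}"
        using bA by (cases ?A) auto
      moreover have "(\<exists>k<Suc i. Q k \<and> \<not> P k \<and> (\<forall>m. k < m \<and> m < Suc i \<longrightarrow> (P m \<longleftrightarrow> Q m)))"
        using nPi True by (intro exI[of _ i]) auto
      ultimately show ?thesis using nPi True eA eB by simp
    next
      case False
      show ?thesis using Suc.IH nPi False eA eB ex_Suc_shift[of P i Q] by simp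
    qed
  qed
qed

definition idx :: "'a set list \<Rightarrow> 'a \<Rightarrow> nat" where
  "idx L x = length (takeWhile (\<lambda>Q. x \<notin> Q) L)"

definition cnt :: "'a set list \<Rightarrow> 'a \<Rightarrow> nat" where
  "cnt L x = length (filter (\<lambda>Q. x \<in> Q) L)"

lemma idx_Nil[simp]: "idx [] x = 0" by (simp add: idx_def)
lemma idx_Cons: "idx (Q#L) x = (if x \<in> Q then 0 else Suc (idx L x))"
  by (simp add: idx_def)
lemma idx_append: "idx (A @ B) x = (if x \<in> \<Union>(set A) then idx A x else length A + idx B x)"
  by (induction A) (auto simp: idx_Cons)
lemma idx_less: "x \<in> \<Union>(set L) \<Longrightarrow> idx L x < length L"
  by (induction L) (auto simp: idx_Cons)
lemma cnt_Cons: "cnt (Q#L) x = (if x \<in> Q then Suc (cnt L x) else cnt L x)"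
  by (simp add: cnt_def)

lemma refine_Nil[simp]: "refine [] S = []" by (simp add: refine_def)
lemma refine_Cons: "refine (Q#L) S = (if Q \<inter> S \<noteq> {} \<and> Q - S \<noteq> {} then [Q \<inter> S, Q - S] else [Q]) @ refine L S"
  by (simp add: refine_def)

lemma refine_Un: "\<Union>(set (refine L S)) = \<Union>(set L)"
  by (induction L) (auto simp: refine_Cons)

lemma refine_cnt: "cnt (refine L S) x = cnt L x"
  by (induction L) (auto simp: refine_Cons cnt_def)

lemma refine_idx:
  assumes "x \<in> \<Union>(set L)" "y \<in> \<Union>(set L)"
  shows "idx (refine L S) x < idx (refine L S) y \<longleftrightarrow> idx L x < idx L y \<or> (idx L x = idx L y \<and> x \<in> S \<and> y \<notin> S)"
  using assms
proof (induction L)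
  case Nil
  then show ?case by simp
next
  case (Cons Q L)
  define F where "F = (if Q \<inter> S \<noteq> {} \<and> Q - S \<noteq> {} then [Q \<inter> S, Q - S] else [Q])"
  have r: "refine (Q#L) S = F @ refine L S" by (simp add: refine_Cons F_def)
  have UF: "\<Union>(set F) = Q" by (auto simp: F_def)
  have ia: "\<And>z. idx (refine (Q#L) S) z = (if z \<in> Q then idx F z else length F + idx (refine L S) z)"
    unfolding r idx_append UF by simp
  show ?case
  proof (cases "x \<in> Q")
    case xQ: True
    show ?thesis
    proof (cases "y \<in> Q")
      case True
      have "idx F x < idx F y \<longleftrightarrow> x \<in> S \<and> y \<notin> S"
      proof (cases "Q \<inter> S \<noteq> {} \<and> Q - S \<noteq> {}")
        case True
        then have "F = [Q \<inter> S, Q - S]" by (simp add: F_def)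
        then show ?thesis using xQ \<open>y \<in> Q\<close> by (simp add: idx_Cons)
      next
        case False
        then have "F = [Q]" by (simp add: F_def)
        then show ?thesis using xQ \<open>y \<in> Q\<close> False by (auto simp add: idx_Cons)
      qed
      then show ?thesis using xQ True by (simp add: ia idx_Cons)
    next
      case False
      have "idx F x < length F" using idx_less[of x F] xQ UF by simp
      then show ?thesis using xQ False by (simp add: ia idx_Cons)
    qed
  next
    case xQ: False
    show ?thesis
    proof (cases "y \<in> Q")
      case True
      have "idx F y < length F" using idx_less[of y F] True UF by simp
      then show ?thesis using xQ True by (simp add: ia idx_Cons)
    next
      case False
      have "x \<in> \<Union>(set L)" "y \<in> \<Union>(set L)" using Cons.prems xQ False by auto
      then have "idx (refine L S) x < idx (refine L S) y \<longleftrightarrow> idx L x < idx L y \<or> (idx L x = idx L y \<and> x \<in> S \<and> y \<notin> S)"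
        by (rule Cons.IH)
      then show ?thesis using xQ False by (simp add: ia idx_Cons)
    qed
  qed
qed

lemma fold_props:
  "\<Union>(set (foldl (\<lambda>Qs v. refine Qs (S v)) [V] bs)) = V"
  by (induction bs rule: rev_induct) (auto simp: refine_Un)

lemma fold_cnt:
  "cnt (foldl (\<lambda>Qs v. refine Qs (S v)) [V] bs) x = (if x \<in> V then 1 else 0)"
proof (induction bs rule: rev_induct)
  case Nil
  then show ?case by (simp add: cnt_def)
next
  case (snoc b bs)
  then show ?case by (simp only: foldl_append foldl_Cons foldl_Nil refine_cnt)
qed

lemma fold_idx:
  "\<forall>x\<in>V. \<forall>y\<in>V. idx (foldl (\<lambda>Qs v. refine Qs (S v)) [V] bs) x < idx (foldl (\<lambda>Qs v. refine Qs (S v)) [V] bs) y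
     \<longleftrightarrow> (\<exists>k<length bs. (\<forall>m<k. (x \<in> S (bs!m)) = (y \<in> S (bs!m))) \<and> x \<in> S (bs!k) \<and> y \<notin> S (bs!k))"
proof (induction bs rule: rev_induct)
  case Nil
  then show ?case by (simp add: idx_Cons)
next
  case (snoc b bs)
  let ?F = "foldl (\<lambda>Qs v. refine Qs (S v)) [V] bs"
  let ?D = "\<lambda>x y. (\<exists>k<length bs. (\<forall>m<k. (x \<in> S (bs!m)) = (y \<in> S (bs!m))) \<and> x \<in> S (bs!k) \<and> y \<notin> S (bs!k))"
  have U: "\<Union>(set ?F) = V" by (rule fold_props)
  show ?case
  proof (intro ballI)
    fix x y assume x: "x \<in> V" and y: "y \<in> V"
    have i1: "idx ?F x < idx ?F y \<longleftrightarrow> ?D x y" using snoc.IH x y by (simp only: Ball_def)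
    have i2: "idx ?F y < idx ?F x \<longleftrightarrow> ?D y x" using snoc.IH x y by (simp only: Ball_def)
    have eq: "idx ?F x = idx ?F y \<longleftrightarrow> (\<forall>m<length bs. (x \<in> S (bs!m)) = (y \<in> S (bs!m)))"
    proof
      assume e: "idx ?F x = idx ?F y"
      show "\<forall>m<length bs. (x \<in> S (bs!m)) = (y \<in> S (bs!m))"
      proof (rule ccontr)
        assume "\<not> ?thesis"
        then obtain m where m: "m < length bs" "(x \<in> S (bs!m)) \<noteq> (y \<in> S (bs!m))" by blast
        define k where "k = (LEAST m. m < length bs \<and> (x \<in> S (bs!m)) \<noteq> (y \<in> S (bs!m)))"
        have k: "k < length bs" "(x \<in> S (bs!k)) \<noteq> (y \<in> S (bs!k))"
          using LeastI[of "\<lambda>m. m < length bs \<and> (x \<in> S (bs!m)) \<noteq> (y \<in> S (bs!m))", OF conjI[OF m]] k_def by auto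
        have km: "\<forall>m<k. (x \<in> S (bs!m)) = (y \<in> S (bs!m))"
        proof (intro allI impI)
          fix m assume "m < k"
          then have "\<not> (m < length bs \<and> (x \<in> S (bs!m)) \<noteq> (y \<in> S (bs!m)))"
            unfolding k_def by (rule not_less_Least)
          then show "(x \<in> S (bs!m)) = (y \<in> S (bs!m))" using \<open>m < k\<close> k(1) by simp
        qed
        have "?D x y \<or> ?D y x"
        proof (cases "x \<in> S (bs!k)")
          case True
          then have "?D x y" using k km by blast
          then show ?thesis ..
        next
          case False
          then have "?D y x" using k km by (metis (no_types))
          then show ?thesis ..
        qed
        then have "idx ?F x < idx ?F y \<or> idx ?F y < idx ?F x" using i1 i2 by blast
        then show False using e by simp
      qed
    next
      assume "\<forall>m<length bs. (x \<in> S (bs!m)) = (y \<in> S (bs!m))"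
      then have "\<not> ?D x y" "\<not> ?D y x" by auto
      then have "\<not> idx ?F x < idx ?F y" "\<not> idx ?F y < idx ?F x" using i1 i2 by blast+
      then show "idx ?F x = idx ?F y" by linarith
    qed
    have "idx (refine ?F (S b)) x < idx (refine ?F (S b)) y \<longleftrightarrow>
        idx ?F x < idx ?F y \<or> (idx ?F x = idx ?F y \<and> x \<in> S b \<and> y \<notin> S b)"
      using refine_idx[of x ?F y "S b", unfolded U, OF x y] .
    also have "\<dots> \<longleftrightarrow> (\<exists>k<length (bs@[b]). (\<forall>m<k. (x \<in> S ((bs@[b])!m)) = (y \<in> S ((bs@[b])!m))) \<and> x \<in> S ((bs@[b])!k) \<and> y \<notin> S ((bs@[b])!k))"
      (is "_ \<longleftrightarrow> ?R")
    proof
      assume "idx ?F x < idx ?F y \<or> (idx ?F x = idx ?F y \<and> x \<in> S b \<and> y \<notin> S b)"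
      then show ?R
      proof
        assume "idx ?F x < idx ?F y"
        then obtain k where k: "k < length bs" "\<forall>m<k. (x \<in> S (bs!m)) = (y \<in> S (bs!m))" "x \<in> S (bs!k)" "y \<notin> S (bs!k)"
          using i1 by blast
        then show ?R by (intro exI[of _ k]) (auto simp: nth_append)
      next
        assume a: "idx ?F x = idx ?F y \<and> x \<in> S b \<and> y \<notin> S b"
        then show ?R using eq by (intro exI[of _ "length bs"]) (auto simp: nth_append)
      qed
    next
      assume ?R
      then obtain k where k: "k < Suc (length bs)" "\<forall>m<k. (x \<in> S ((bs@[b])!m)) = (y \<in> S ((bs@[b])!m))"
          "x \<in> S ((bs@[b])!k)" "y \<notin> S ((bs@[b])!k)" by auto
      show "idx ?F x < idx ?F y \<or> (idx ?F x = idx ?F y \<and> x \<in> S b \<and> y \<notin> S b)"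
      proof (cases "k < length bs")
        case True
        then have "?D x y" using k by (intro exI[of _ k]) (auto simp: nth_append)
        then show ?thesis using i1 by blast
      next
        case False
        then have "k = length bs" using k by simp
        then show ?thesis using k eq by (auto simp: nth_append)
      qed
    qed
    finally show "idx (foldl (\<lambda>Qs v. refine Qs (S v)) [V] (bs @ [b])) x < idx (foldl (\<lambda>Qs v. refine Qs (S v)) [V] (bs @ [b])) y \<longleftrightarrow>
      (\<exists>k<length (bs @ [b]). (\<forall>m<k. (x \<in> S ((bs @ [b]) ! m)) = (y \<in> S ((bs @ [b]) ! m))) \<and> x \<in> S ((bs @ [b]) ! k) \<and> y \<notin> S ((bs @ [b]) ! k))"
      by simp
  qed
qed


lemma prec_rev: "prec (rev xs) x y \<longleftrightarrow> prec xs y x"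
proof
  assume "prec (rev xs) x y"
  then obtain i j where ij: "i < j" "j < length xs" "rev xs ! i = x" "rev xs ! j = y"
    by (auto simp: prec_def)
  have "xs ! (length xs - Suc j) = y" "xs ! (length xs - Suc i) = x" using ij by (auto simp: rev_nth)
  moreover have "length xs - Suc j < length xs - Suc i" "length xs - Suc i < length xs" using ij by auto
  ultimately show "prec xs y x" unfolding prec_def by blast
next
  assume "prec xs y x"
  then obtain i j where ij: "i < j" "j < length xs" "xs ! i = y" "xs ! j = x"
    by (auto simp: prec_def)
  have "rev xs ! (length xs - Suc j) = x" "rev xs ! (length xs - Suc i) = y" using ij by (auto simp: rev_nth)
  moreover have "length xs - Suc j < length xs - Suc i" "length xs - Suc i < length xs" using ij by auto
  ultimately show "prec (rev xs) x y" unfolding prec_def by (metis length_rev)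
qed

lemma prec_set: "prec xs x y \<Longrightarrow> x \<in> set xs \<and> y \<in> set xs"
  by (auto simp: prec_def)

lemma prec_append_D: "prec (A @ B) x y \<Longrightarrow> prec A x y \<or> (x \<in> set A \<and> y \<in> set B) \<or> prec B x y"
proof -
  assume "prec (A @ B) x y"
  then obtain i j where ij: "i < j" "j < length (A @ B)" "(A@B) ! i = x" "(A@B) ! j = y"
    by (auto simp: prec_def)
  show ?thesis
  proof (cases "j < length A")
    case True
    then have "prec A x y" using ij unfolding prec_def by (metis nth_append order.strict_trans)
    then show ?thesis by simp
  next
    case jA: False
    show ?thesis
    proof (cases "i < length A")
      case True
      then have "x \<in> set A" using ij by (metis nth_append nth_mem)
      moreover have "y \<in> set B" using ij jA by (metis add_diff_inverse_nat length_append nat_add_left_cancel_less nth_append nth_mem)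
      ultimately show ?thesis by simp
    next
      case False
      have "B ! (i - length A) = x" "B ! (j - length A) = y" using ij jA False by (auto simp: nth_append)
      moreover have "i - length A < j - length A" "j - length A < length B" using ij jA False by auto
      ultimately have "prec B x y" unfolding prec_def by blast
      then show ?thesis by simp
    qed
  qed
qed

lemma cnt_pos: "Q \<in> set L \<Longrightarrow> y \<in> Q \<Longrightarrow> cnt L y \<ge> 1"
  unfolding cnt_def by (metis (mono_tags, lifting) One_nat_def Suc_leI filter_empty_conv length_greater_0_conv)

lemma prec_concat_idx:
  "prec (concat (map g L)) x y \<Longrightarrow> (\<forall>Q. set (g Q) \<subseteq> Q) \<Longrightarrow> cnt L y \<le> 1 \<Longrightarrow> idx L x \<le> idx L y"
proof (induction L)
  case Nil
  then show ?case by (simp add: prec_def)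
next
  case (Cons Q L)
  have e: "concat (map g (Q#L)) = g Q @ concat (map g L)" by simp
  show ?case
  proof (cases "x \<in> Q")
    case True
    then show ?thesis by (simp add: idx_Cons)
  next
    case xQ: False
    have xg: "x \<notin> set (g Q)" using xQ Cons.prems(2) by blast
    then have p: "prec (concat (map g L)) x y"
      using prec_append_D[of "g Q" "concat (map g L)" x y] Cons.prems(1) e prec_set by metis
    then have "y \<in> set (concat (map g L))" using prec_set by metis
    then obtain Q' where Q': "Q' \<in> set L" "y \<in> set (g Q')" by auto
    then have "y \<in> Q'" using Cons.prems(2) by blast
    then have c1: "cnt L y \<ge> 1" using cnt_pos Q'(1) by metis
    have yQ: "y \<notin> Q"
    proof
      assume "y \<in> Q"
      then have "cnt (Q#L) y = Suc (cnt L y)" by (simp add: cnt_Cons)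
      then show False using c1 Cons.prems(3) by simp
    qed
    have "cnt L y \<le> 1" using Cons.prems(3) yQ by (simp add: cnt_Cons)
    then have "idx L x \<le> idx L y" using Cons.IH p Cons.prems(2) by blast
    then show ?thesis using xQ yQ by (simp add: idx_Cons)
  qed
qed

lemma filter_idx:
  "(\<forall>Q\<in>set L. y \<in> Q \<longrightarrow> P Q) \<Longrightarrow> idx L y < idx L x \<Longrightarrow> idx (filter P L) y < idx (filter P L) x"
proof (induction L)
  case Nil
  then show ?case by simp
next
  case (Cons Q L)
  show ?case
  proof (cases "y \<in> Q")
    case True
    then have "P Q" using Cons.prems by simp
    moreover have "x \<notin> Q" using Cons.prems(2) True by (auto simp: idx_Cons split: if_splits)
    ultimately show ?thesis using True by (simp add: idx_Cons)
  next
    case False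
    have "x \<notin> Q" using Cons.prems(2) False by (auto simp: idx_Cons split: if_splits)
    then have "idx L y < idx L x" using Cons.prems(2) False by (simp add: idx_Cons)
    then have "idx (filter P L) y < idx (filter P L) x" using Cons.IH Cons.prems(1) by simp
    then show ?thesis using False \<open>x \<notin> Q\<close> by (simp add: idx_Cons)
  qed
qed

lemma cnt_idx: "cnt L x \<le> 1 \<Longrightarrow> k < length L \<Longrightarrow> x \<in> L ! k \<Longrightarrow> idx L x = k"
proof (induction L arbitrary: k)
  case Nil
  then show ?case by simp
next
  case (Cons Q L)
  show ?case
  proof (cases k)
    case 0
    then show ?thesis using Cons.prems by (simp add: idx_Cons)
  next
    case (Suc k')
    then have xk: "x \<in> L ! k'" "k' < length L" using Cons.prems by auto
    have "x \<notin> Q"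
    proof
      assume "x \<in> Q"
      have "cnt L x \<ge> 1" using cnt_pos[of "L!k'" L x] xk by simp
      then show False using Cons.prems(1) \<open>x \<in> Q\<close> by (simp add: cnt_Cons)
    qed
    then have "cnt L x \<le> 1" using Cons.prems(1) by (simp add: cnt_Cons)
    then have "idx L x = k'" using Cons.IH xk by blast
    then show ?thesis using Suc \<open>x \<notin> Q\<close> by (simp add: idx_Cons)
  qed
qed

lemma cnt_filter2: "cnt (filter P L @ filter (\<lambda>Q. \<not> P Q) L) x = cnt L x"
  unfolding cnt_def by (induction L) auto

lemma dfs_Pb:
  assumes dfs: "dfs_order V G s \<omega>"
    and disc: "\<forall>i j. 0 < i \<and> i < length \<omega> \<and> j < i \<and> G (\<omega>!j) (\<omega>!i) \<and>
       (\<forall>k. j < k \<and> k < i \<longrightarrow> {w. G (\<omega>!k) w} \<subseteq> set (take i \<omega>)) \<longrightarrow> (\<omega>!j, \<omega>!i) \<in> R"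
  shows "b < length \<omega> \<Longrightarrow> a < b \<Longrightarrow> (\<omega>!a, \<omega>!b) \<in> R\<^sup>+ \<or> {w. G (\<omega>!a) w} \<subseteq> set (take b \<omega>)"
proof (induction b arbitrary: a rule: less_induct)
  case (less b)
  have "0 < b" using less.prems by simp
  then obtain j where j: "j < b" "G (\<omega>!j) (\<omega>!b)"
      "\<forall>k. j < k \<and> k < b \<longrightarrow> {w. G (\<omega>!k) w} \<subseteq> set (take b \<omega>)"
    using dfs less.prems(1) unfolding dfs_order_def by blast
  have R: "(\<omega>!j, \<omega>!b) \<in> R" using disc j \<open>0 < b\<close> less.prems(1) by blast
  consider "a = j" | "j < a" | "a < j" by linarith
  then show ?case
  proof cases
    case 1
    then show ?thesis using R by auto
  next
    case 2
    then show ?thesis using j less.prems by blast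
  next
    case 3
    have "(\<omega>!a, \<omega>!j) \<in> R\<^sup>+ \<or> {w. G (\<omega>!a) w} \<subseteq> set (take j \<omega>)"
      using less.IH[of j a] j less.prems 3 by simp
    then show ?thesis
    proof
      assume "(\<omega>!a, \<omega>!j) \<in> R\<^sup>+"
      then show ?thesis using R by (meson trancl.trancl_into_trancl)
    next
      assume "{w. G (\<omega>!a) w} \<subseteq> set (take j \<omega>)"
      moreover have "set (take j \<omega>) \<subseteq> set (take b \<omega>)" using j(1) by (simp add: set_take_subset_set_take)
      ultimately show ?thesis by blast
    qed
  qed
qed



lemma nth_notin_take: "distinct xs \<Longrightarrow> i < length xs \<Longrightarrow> xs!i \<notin> set (take i xs)"
  by (auto simp: in_take_iff nth_eq_iff_index_eq)

locale tr =
  fixes V :: "'a set" and E :: "'a \<Rightarrow> 'a \<Rightarrow> bool" and TE :: "'a \<Rightarrow> 'a \<Rightarrow> bool"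
    and s :: 'a and par :: "'a \<Rightarrow> 'a" and h :: "'a \<Rightarrow> nat"
  assumes Eg: "E x y \<Longrightarrow> x \<in> V \<and> y \<in> V \<and> x \<noteq> y \<and> E y x"
    and sV: "s \<in> V"
    and par_in: "v \<in> V \<Longrightarrow> v \<noteq> s \<Longrightarrow> par v \<in> V"
    and par_E: "v \<in> V \<Longrightarrow> v \<noteq> s \<Longrightarrow> E (par v) v"
    and h_par: "v \<in> V \<Longrightarrow> v \<noteq> s \<Longrightarrow> h (par v) < h v"
    and TE_iff: "TE x y \<longleftrightarrow> (y \<in> V \<and> y \<noteq> s \<and> x = par y) \<or> (x \<in> V \<and> x \<noteq> s \<and> y = par x)"
    and normal: "E x y \<Longrightarrow> (x,y) \<in> {(par v, v) | v. v \<in> V \<and> v \<noteq> s}\<^sup>+ \<or> (y,x) \<in> {(par v, v) | v. v \<in> V \<and> v \<noteq> s}\<^sup>+"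
begin

definition R where "R = {(par v, v) | v. v \<in> V \<and> v \<noteq> s}"

lemma normalR: "E x y \<Longrightarrow> (x,y) \<in> R\<^sup>+ \<or> (y,x) \<in> R\<^sup>+"
  using normal unfolding R_def .

lemma R_iff: "(x,y) \<in> R \<longleftrightarrow> y \<in> V \<and> y \<noteq> s \<and> x = par y"
  by (auto simp: R_def)

lemma R_h: "(x,y) \<in> R\<^sup>+ \<Longrightarrow> h x < h y"
proof (induction rule: trancl_induct)
  case (base y)
  then show ?case using h_par R_iff by auto
next
  case (step y z)
  have "h y < h z" using step.hyps(2) h_par R_iff by auto
  then show ?case using step.IH by simp
qed

lemma R_irr: "(x,x) \<notin> R\<^sup>+"
  using R_h by blast

lemma R_last: "(a,c) \<in> R\<^sup>+ \<Longrightarrow> c \<in> V \<and> c \<noteq> s \<and> (a, par c) \<in> R\<^sup>*"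
proof -
  assume ac: "(a,c) \<in> R\<^sup>+"
  obtain z where z: "(a,z) \<in> R\<^sup>*" "(z,c) \<in> R" using tranclD2[OF ac] by blast
  then have "c \<in> V \<and> c \<noteq> s \<and> z = par c" using R_iff by simp
  then show ?thesis using z by simp
qed

lemma R_first: "(a,c) \<in> R\<^sup>+ \<Longrightarrow> \<exists>d. (a,d) \<in> R \<and> (d,c) \<in> R\<^sup>*"
  by (rule tranclD)

lemma R_V: "(a,c) \<in> R\<^sup>+ \<Longrightarrow> a \<in> V \<and> c \<in> V"
proof -
  assume a: "(a,c) \<in> R\<^sup>+"
  obtain d where "(a,d) \<in> R" using R_first[OF a] by blast
  then have "a \<in> V" using R_iff par_in by auto
  then show ?thesis using R_last[OF a] by blast
qed

lemma chain: "(a,w) \<in> R\<^sup>* \<Longrightarrow> (b,w) \<in> R\<^sup>* \<Longrightarrow> a = b \<or> (a,b) \<in> R\<^sup>+ \<or> (b,a) \<in> R\<^sup>+"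
proof (induction arbitrary: b rule: rtrancl_induct)
  case base
  from rtranclD[OF base] show ?case by blast
next
  case (step y z)
  note ay = step.hyps(1) and yz = step.hyps(2) and IH = step.IH
  from step.prems show ?case
  proof (cases rule: rtranclE)
    case base
    have "(a,z) \<in> R\<^sup>+" using rtrancl_into_trancl1[OF ay yz] .
    then show ?thesis using base by simp
  next
    case (step y')
    have "y' = par z" "y = par z" using step(2) yz R_iff by simp_all
    then have "(b,y) \<in> R\<^sup>*" using step(1) by simp
    then show ?thesis using IH by simp
  qed
qed

lemma TE_E: "TE x y \<Longrightarrow> E x y"
proof -
  assume "TE x y"
  then have "(y \<in> V \<and> y \<noteq> s \<and> x = par y) \<or> (x \<in> V \<and> x \<noteq> s \<and> y = par x)" using TE_iff by simp
  then show ?thesis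
  proof
    assume "y \<in> V \<and> y \<noteq> s \<and> x = par y"
    then show ?thesis using par_E by blast
  next
    assume "x \<in> V \<and> x \<noteq> s \<and> y = par x"
    then have "E y x" using par_E by blast
    then show ?thesis using Eg by blast
  qed
qed

lemma TE_sym: "TE x y \<Longrightarrow> TE y x"
  using TE_iff[of x y] TE_iff[of y x] by blast

definition good :: "'a list \<Rightarrow> bool" where
  "good \<omega> \<longleftrightarrow> is_vorder V \<omega> \<and> \<omega> \<noteq> [] \<and> hd \<omega> = s \<and>
     (\<forall>i. 0 < i \<and> i < length \<omega> \<longrightarrow> (\<exists>j<i. TE (\<omega>!j) (\<omega>!i)))"

lemma good_s: "good \<omega> \<Longrightarrow> \<omega>!0 = s"
  using hd_conv_nth[of \<omega>] unfolding good_def by simp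

lemma good_closed: "good \<omega> \<Longrightarrow> i \<le> length \<omega> \<Longrightarrow> v \<in> set (take i \<omega>) \<Longrightarrow> v \<noteq> s \<Longrightarrow> par v \<in> set (take i \<omega>)"
proof (induction i arbitrary: v)
  case 0
  then show ?case by simp
next
  case (Suc i)
  have il: "i < length \<omega>" using Suc.prems by simp
  have tk: "take (Suc i) \<omega> = take i \<omega> @ [\<omega>!i]" using il by (simp add: take_Suc_conv_app_nth)
  have dist: "distinct \<omega>" using Suc.prems(1) unfolding good_def is_vorder_def by blast
  show ?case
  proof (cases "v \<in> set (take i \<omega>)")
    case True
    then show ?thesis using Suc.IH Suc.prems tk by auto
  next
    case False
    then have v: "v = \<omega>!i" using Suc.prems(3) tk by auto
    have "i \<noteq> 0"
    proof
      assume "i = 0"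
      then show False using v Suc.prems(4) good_s[OF Suc.prems(1)] by simp
    qed
    then obtain j where j: "j < i" "TE (\<omega>!j) (\<omega>!i)" using Suc.prems(1) il unfolding good_def by blast
    have jin: "\<omega>!j \<in> set (take i \<omega>)" using j(1) il by (auto simp: in_take_iff)
    show ?thesis
    proof (cases "\<omega>!j = par (\<omega>!i)")
      case True
      then show ?thesis using v jin tk by auto
    next
      case False
      then have "\<omega>!j \<in> V \<and> \<omega>!j \<noteq> s \<and> \<omega>!i = par (\<omega>!j)" using j(2) TE_iff by blast
      then have "\<omega>!i \<in> set (take i \<omega>)" using Suc.IH[of "\<omega>!j"] jin Suc.prems(1) il by simp
      then show ?thesis using nth_notin_take[OF dist il] by simp
    qed
  qed
qed

lemma good_par: "good \<omega> \<Longrightarrow> j < i \<Longrightarrow> i < length \<omega> \<Longrightarrow> TE (\<omega>!j) (\<omega>!i) \<Longrightarrow> \<omega>!i \<noteq> s \<and> \<omega>!j = par (\<omega>!i)"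
proof -
  assume g: "good \<omega>" and j: "j < i" "i < length \<omega>" "TE (\<omega>!j) (\<omega>!i)"
  have dist: "distinct \<omega>" using g unfolding good_def is_vorder_def by blast
  have jin: "\<omega>!j \<in> set (take i \<omega>)" using j by (auto simp: in_take_iff)
  show ?thesis
  proof (cases "\<omega>!i \<in> V \<and> \<omega>!i \<noteq> s \<and> \<omega>!j = par (\<omega>!i)")
    case True
    then show ?thesis by blast
  next
    case False
    then have "\<omega>!j \<in> V \<and> \<omega>!j \<noteq> s \<and> \<omega>!i = par (\<omega>!j)" using j(3) TE_iff by blast
    then have "\<omega>!i \<in> set (take i \<omega>)" using good_closed[OF g, of i "\<omega>!j"] jin j by simp
    then show ?thesis using nth_notin_take[OF dist j(2)] by simp
  qed
qed

lemma anc_closed: "(\<forall>v\<in>C. v \<noteq> s \<longrightarrow> par v \<in> C) \<Longrightarrow> (a,b) \<in> R\<^sup>+ \<Longrightarrow> b \<in> C \<Longrightarrow> a \<in> C"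
proof -
  assume C: "\<forall>v\<in>C. v \<noteq> s \<longrightarrow> par v \<in> C" and ab: "(a,b) \<in> R\<^sup>+"
  have "b \<in> C \<longrightarrow> a \<in> C" using ab
  proof (induction rule: trancl_induct)
    case (base y)
    then show ?case using C R_iff by auto
  next
    case (step y z)
    then show ?case using C R_iff by auto
  qed
  then show "b \<in> C \<Longrightarrow> a \<in> C" by blast
qed

lemma good_anc: "good \<omega> \<Longrightarrow> k < length \<omega> \<Longrightarrow> l < length \<omega> \<Longrightarrow> (\<omega>!k, \<omega>!l) \<in> R\<^sup>+ \<Longrightarrow> k < l"
proof -
  assume g: "good \<omega>" and kl: "k < length \<omega>" "l < length \<omega>" "(\<omega>!k, \<omega>!l) \<in> R\<^sup>+"
  have dist: "distinct \<omega>" using g unfolding good_def is_vorder_def by blast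
  let ?C = "set (take (Suc l) \<omega>)"
  have C: "\<forall>v\<in>?C. v \<noteq> s \<longrightarrow> par v \<in> ?C" using good_closed[OF g, of "Suc l"] kl by auto
  have "\<omega>!l \<in> ?C" using kl by (auto simp: in_take_iff)
  then have "\<omega>!k \<in> ?C" using anc_closed[OF C kl(3)] by blast
  then obtain k' where "k' < Suc l" "\<omega>!k' = \<omega>!k" using kl by (auto simp: in_take_iff)
  moreover have "k' < length \<omega>" using \<open>k' < Suc l\<close> kl by simp
  ultimately have "k' = k" using nth_eq_iff_index_eq[OF dist, of k' k] kl by simp
  moreover have "k \<noteq> l" using R_irr kl by blast
  ultimately show "k < l" using \<open>k' < Suc l\<close> by simp
qed

lemma good_pos: "good \<omega> \<Longrightarrow> v \<in> V \<Longrightarrow> \<exists>k<length \<omega>. \<omega>!k = v"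
  unfolding good_def is_vorder_def by (auto simp: in_set_conv_nth)

lemma good_dist: "good \<omega> \<Longrightarrow> distinct \<omega>"
  unfolding good_def is_vorder_def by blast

lemma good_set: "good \<omega> \<Longrightarrow> set \<omega> = V"
  unfolding good_def is_vorder_def by blast

end


abbreviation LX where "LX \<equiv> lexord {(a,b). a < (b::nat)}"

lemma lex_irr: "(xs, xs) \<notin> LX"
  using lexordp_irreflexive'[of xs] lexordp_conv_lexord[of xs xs] by simp

lemma lex_asym: "(xs, ys) \<in> LX \<Longrightarrow> (ys, xs) \<notin> LX"
  using lexordp_trans[of xs ys xs] lexordp_irreflexive'[of xs] lexordp_conv_lexord by metis

lemma lex_tr3: "(c, d) \<notin> LX \<Longrightarrow> (d, w) \<notin> LX \<Longrightarrow> (c, w) \<notin> LX"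
proof
  assume a: "(c, d) \<notin> LX" "(d, w) \<notin> LX" "(c, w) \<in> LX"
  have "ord_class.lexordp c d \<or> c = d \<or> ord_class.lexordp d c" by (rule lexordp_linear)
  moreover have "\<not> ord_class.lexordp c d" "\<not> ord_class.lexordp d w" "ord_class.lexordp c w" using a lexordp_conv_lexord by metis+
  ultimately have "ord_class.lexordp d c" by auto
  then have "ord_class.lexordp d w" using \<open>ord_class.lexordp c w\<close> lexordp_trans by blast
  then show False using \<open>\<not> ord_class.lexordp d w\<close> by simp
qed

context tr
begin

definition Dom :: "'a \<Rightarrow> 'a \<Rightarrow> 'a \<Rightarrow> bool" where
  "Dom x y p \<longleftrightarrow> (\<exists>u. (u,p) \<in> R\<^sup>* \<and> E u x \<and> \<not> E u y \<and>
      (\<forall>u'. (u',p) \<in> R\<^sup>* \<and> (u,u') \<in> R\<^sup>+ \<longrightarrow> (E u' x \<longleftrightarrow> E u' y)))"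

lemma lab_dom:
  assumes g: "good \<omega>" and i: "i \<le> length \<omega>"
    and H1: "\<forall>u. (u,p) \<in> R\<^sup>* \<longrightarrow> u \<in> set (take i \<omega>)"
    and H2x: "\<forall>k<i. E (\<omega>!k) x \<longrightarrow> (\<omega>!k, p) \<in> R\<^sup>*"
    and H2y: "\<forall>k<i. E (\<omega>!k) y \<longrightarrow> (\<omega>!k, p) \<in> R\<^sup>*"
    and xs: "x \<noteq> s" and ys: "y \<noteq> s"
  shows "(lex_label E s \<omega> i y, lex_label E s \<omega> i x) \<in> LX \<longleftrightarrow> Dom x y p"
proof -
  have dist: "distinct \<omega>" using good_dist[OF g] .
  have "(lex_label E s \<omega> i y, lex_label E s \<omega> i x) \<in> LX \<longleftrightarrow>
    (\<exists>k<i. E (\<omega>!k) x \<and> \<not> E (\<omega>!k) y \<and> (\<forall>m. k < m \<and> m < i \<longrightarrow> (E (\<omega>!m) y \<longleftrightarrow> E (\<omega>!m) x)))"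
    using labX[of "\<lambda>q. E (\<omega>!q) y" i "\<lambda>q. E (\<omega>!q) x"] xs ys by (simp add: lex_label_def)
  also have "\<dots> \<longleftrightarrow> Dom x y p"
  proof
    assume "\<exists>k<i. E (\<omega>!k) x \<and> \<not> E (\<omega>!k) y \<and> (\<forall>m. k < m \<and> m < i \<longrightarrow> (E (\<omega>!m) y \<longleftrightarrow> E (\<omega>!m) x))"
    then obtain k where k: "k < i" "E (\<omega>!k) x" "\<not> E (\<omega>!k) y"
      "\<forall>m. k < m \<and> m < i \<longrightarrow> (E (\<omega>!m) y \<longleftrightarrow> E (\<omega>!m) x)" by blast
    have up: "(\<omega>!k, p) \<in> R\<^sup>*" using H2x k by blast
    have "\<forall>u'. (u',p) \<in> R\<^sup>* \<and> (\<omega>!k,u') \<in> R\<^sup>+ \<longrightarrow> (E u' x \<longleftrightarrow> E u' y)"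
    proof (intro allI impI)
      fix u' assume u': "(u',p) \<in> R\<^sup>* \<and> (\<omega>!k,u') \<in> R\<^sup>+"
      then have "u' \<in> set (take i \<omega>)" using H1 by blast
      then obtain m where m: "m < i" "m < length \<omega>" "\<omega>!m = u'" by (auto simp: in_take_iff)
      have "k < m" using good_anc[OF g, of k m] u' m k i by simp
      then show "E u' x \<longleftrightarrow> E u' y" using k(4) m by blast
    qed
    then show "Dom x y p" unfolding Dom_def using up k by blast
  next
    assume "Dom x y p"
    then obtain u where u: "(u,p) \<in> R\<^sup>*" "E u x" "\<not> E u y"
      "\<forall>u'. (u',p) \<in> R\<^sup>* \<and> (u,u') \<in> R\<^sup>+ \<longrightarrow> (E u' x \<longleftrightarrow> E u' y)" unfolding Dom_def by blast
    have "u \<in> set (take i \<omega>)" using H1 u by blast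
    then obtain k where k: "k < i" "k < length \<omega>" "\<omega>!k = u" by (auto simp: in_take_iff)
    have "\<forall>m. k < m \<and> m < i \<longrightarrow> (E (\<omega>!m) y \<longleftrightarrow> E (\<omega>!m) x)"
    proof (intro allI impI)
      fix m assume m: "k < m \<and> m < i"
      show "E (\<omega>!m) y \<longleftrightarrow> E (\<omega>!m) x"
      proof (rule ccontr)
        assume ne: "\<not> (E (\<omega>!m) y \<longleftrightarrow> E (\<omega>!m) x)"
        then have mp: "(\<omega>!m, p) \<in> R\<^sup>*" using H2x H2y m by blast
        have ml: "m < length \<omega>" using m i by simp
        from chain[OF mp u(1)] consider "\<omega>!m = u" | "(\<omega>!m, u) \<in> R\<^sup>+" | "(u, \<omega>!m) \<in> R\<^sup>+" by blast
        then show False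
        proof cases
          case 1
          then have "m = k" using nth_eq_iff_index_eq[OF dist ml k(2)] k by simp
          then show False using m by simp
        next
          case 2
          then have "m < k" using good_anc[OF g ml k(2)] k by simp
          then show False using m by simp
        next
          case 3
          then have "E (\<omega>!m) x \<longleftrightarrow> E (\<omega>!m) y" using u(4) mp by blast
          then show False using ne by blast
        qed
      qed
    qed
    then show "\<exists>k<i. E (\<omega>!k) x \<and> \<not> E (\<omega>!k) y \<and> (\<forall>m. k < m \<and> m < i \<longrightarrow> (E (\<omega>!m) y \<longleftrightarrow> E (\<omega>!m) x))"
      using k u by blast
  qed
  finally show ?thesis .
qed

lemma dfs_good: "dfs_order V TE s \<sigma> \<Longrightarrow> good \<sigma>"
  unfolding dfs_order_def good_def by blast

lemma dfs_Pb_TE: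
  assumes d: "dfs_order V TE s \<sigma>"
  shows "b < length \<sigma> \<Longrightarrow> a < b \<Longrightarrow> (\<sigma>!a, \<sigma>!b) \<in> R\<^sup>+ \<or> {w. TE (\<sigma>!a) w} \<subseteq> set (take b \<sigma>)"
proof (rule dfs_Pb[OF d])
  have g: "good \<sigma>" using dfs_good[OF d] .
  show "\<forall>i j. 0 < i \<and> i < length \<sigma> \<and> j < i \<and> TE (\<sigma>!j) (\<sigma>!i) \<and>
       (\<forall>k. j < k \<and> k < i \<longrightarrow> {w. TE (\<sigma>!k) w} \<subseteq> set (take i \<sigma>)) \<longrightarrow> (\<sigma>!j, \<sigma>!i) \<in> R"
  proof (intro allI impI)
    fix i j assume a: "0 < i \<and> i < length \<sigma> \<and> j < i \<and> TE (\<sigma>!j) (\<sigma>!i) \<and>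
       (\<forall>k. j < k \<and> k < i \<longrightarrow> {w. TE (\<sigma>!k) w} \<subseteq> set (take i \<sigma>))"
    then have "\<sigma>!i \<noteq> s \<and> \<sigma>!j = par (\<sigma>!i)" using good_par[OF g] by blast
    moreover have "\<sigma>!i \<in> V" using a good_set[OF g] by auto
    ultimately show "(\<sigma>!j, \<sigma>!i) \<in> R" using R_iff by simp
  qed
qed

lemma finished:
  assumes d: "dfs_order V TE s \<sigma>" and i: "i < length \<sigma>"
    and u: "u \<in> set (take i \<sigma>)" and uw: "(u,w) \<in> R\<^sup>+" and w: "w \<notin> set (take i \<sigma>)"
  shows "(u, \<sigma>!i) \<in> R\<^sup>+"
proof (rule ccontr)
  assume nu: "(u, \<sigma>!i) \<notin> R\<^sup>+"
  have bstep: "z \<in> set (take i \<sigma>)" if yz: "(y,z) \<in> R" and yin: "y \<in> set (take i \<sigma>)" and ny: "(y, \<sigma>!i) \<notin> R\<^sup>+" for y z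
  proof -
    obtain a where a: "a < i" "a < length \<sigma>" "\<sigma>!a = y" using yin by (auto simp: in_take_iff)
    have "{w. TE y w} \<subseteq> set (take i \<sigma>)" using dfs_Pb_TE[OF d i a(1)] a ny by auto
    moreover have "TE y z" using yz R_iff TE_iff by auto
    ultimately show ?thesis by blast
  qed
  have "u \<in> set (take i \<sigma>) \<longrightarrow> (u, \<sigma>!i) \<notin> R\<^sup>+ \<longrightarrow> w \<in> set (take i \<sigma>)"
    using uw
  proof (induction rule: converse_trancl_induct)
    case (base y)
    then show ?case using bstep by blast
  next
    case (step y z)
    show ?case
    proof (intro impI)
      assume y: "y \<in> set (take i \<sigma>)" "(y, \<sigma>!i) \<notin> R\<^sup>+"
      have "z \<in> set (take i \<sigma>)" using bstep[OF step.hyps(1) y] .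
      moreover have "(z, \<sigma>!i) \<notin> R\<^sup>+" using y(2) step.hyps(1) trancl_into_trancl2 by metis
      ultimately show "w \<in> set (take i \<sigma>)" using step.IH by blast
    qed
  qed
  then show False using u nu w by blast
qed

lemma sigma_nbrs:
  assumes d: "dfs_order V TE s \<sigma>" and i: "0 < i" "i < length \<sigma>"
    and wV: "w \<in> V" and w: "w \<notin> set (take i \<sigma>)"
  shows "\<forall>k<i. E (\<sigma>!k) w \<longrightarrow> (\<sigma>!k, par (\<sigma>!i)) \<in> R\<^sup>*"
proof (intro allI impI)
  fix k assume k: "k < i" "E (\<sigma>!k) w"
  have g: "good \<sigma>" using dfs_good[OF d] .
  obtain l where l: "l < length \<sigma>" "\<sigma>!l = w" using good_pos[OF g wV] by blast
  have il: "i \<le> l"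
  proof (rule ccontr)
    assume "\<not> i \<le> l"
    then have "w \<in> set (take i \<sigma>)" using l by (auto simp: in_take_iff intro!: exI[of _ l])
    then show False using w by simp
  qed
  have kl: "k < length \<sigma>" using k i by simp
  have "(\<sigma>!k, w) \<in> R\<^sup>+"
  proof -
    from normalR[OF k(2)] show ?thesis
    proof
      assume "(w, \<sigma>!k) \<in> R\<^sup>+"
      then have "l < k" using good_anc[OF g l(1) kl] l by simp
      then show ?thesis using k il by simp
    qed
  qed
  moreover have "\<sigma>!k \<in> set (take i \<sigma>)" using k kl by (auto simp: in_take_iff)
  ultimately have "(\<sigma>!k, \<sigma>!i) \<in> R\<^sup>+" using finished[OF d i(2) _ _ w] by blast
  then show "(\<sigma>!k, par (\<sigma>!i)) \<in> R\<^sup>*" using R_last by blast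
qed

lemma sigma_H1:
  assumes g: "good \<sigma>" and i: "0 < i" "i < length \<sigma>"
  shows "\<forall>u. (u, par (\<sigma>!i)) \<in> R\<^sup>* \<longrightarrow> u \<in> set (take i \<sigma>)"
proof (intro allI impI)
  fix u assume u: "(u, par (\<sigma>!i)) \<in> R\<^sup>*"
  have si: "\<sigma>!i \<noteq> s"
  proof
    assume "\<sigma>!i = s"
    then have "\<sigma>!i = \<sigma>!0" using good_s[OF g] by simp
    moreover have "0 < length \<sigma>" using i(2) by linarith
    ultimately show False using nth_eq_iff_index_eq[OF good_dist[OF g], of i 0] i by simp
  qed
  have "\<sigma>!i \<in> V" using good_set[OF g] i by auto
  then have "(par (\<sigma>!i), \<sigma>!i) \<in> R" using R_iff si by simp
  then have uc: "(u, \<sigma>!i) \<in> R\<^sup>+" using u by (meson rtrancl_into_trancl1)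
  then have "u \<in> V" using R_V by blast
  then obtain k where k: "k < length \<sigma>" "\<sigma>!k = u" using good_pos[OF g] by blast
  have "k < i" using good_anc[OF g k(1) i(2)] uc k by simp
  then show "u \<in> set (take i \<sigma>)" using k by (auto simp: in_take_iff)
qed

end


context tr
begin

lemma rtr_V: "(u,p) \<in> R\<^sup>* \<Longrightarrow> p \<in> V \<Longrightarrow> u \<in> V"
  by (metis R_V rtranclD)

lemma pi_side:
  assumes g: "good \<pi>" and lx: "lexdfs_order V E s \<pi>"
    and c: "c \<in> V" "c \<noteq> s" "par c = p" and d: "d \<in> V" "d \<noteq> s" "par d = p"
    and k1: "k1 < length \<pi>" "\<pi>!k1 = c" and k2: "k2 < length \<pi>" "\<pi>!k2 = d" and k12: "k1 \<le> k2"
    and dw: "(d,w) \<in> R\<^sup>*" and wc: "w \<noteq> c"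
  shows "\<not> Dom w c p"
proof -
  have dist: "distinct \<pi>" using good_dist[OF g] .
  have wV: "w \<in> V" using dw d(1) by (metis R_V rtranclD)
  obtain l where l: "l < length \<pi>" "\<pi>!l = w" using good_pos[OF g wV] by blast
  have k2l: "k2 \<le> l"
  proof (cases "w = d")
    case True
    then show ?thesis using nth_eq_iff_index_eq[OF dist l(1) k2(1)] l k2 by simp
  next
    case False
    then have "(d,w) \<in> R\<^sup>+" using dw by (metis rtranclD)
    then show ?thesis using good_anc[OF g k2(1) l(1)] l k2 by simp
  qed
  have "l \<noteq> k1" using wc l k1 by auto
  then have k1l: "k1 < l" using k12 k2l by simp
  have wnt: "w \<notin> set (take k1 \<pi>)"
  proof
    assume "w \<in> set (take k1 \<pi>)"
    then obtain k' where "k' < k1" "k' < length \<pi>" "\<pi>!k' = w" by (auto simp: in_take_iff)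
    then have "k' = l" using nth_eq_iff_index_eq[OF dist _ l(1)] l by simp
    then show False using \<open>k' < k1\<close> k1l by simp
  qed
  have ws: "w \<noteq> s"
  proof
    assume "w = s"
    then have "\<pi>!l = \<pi>!0" using l good_s[OF g] by simp
    moreover have z: "0 < length \<pi>" using l(1) by linarith
    ultimately have "l = 0" using nth_eq_iff_index_eq[OF dist l(1) z] by simp
    then show False using k1l by simp
  qed
  have nl: "(lex_label E s \<pi> k1 c, lex_label E s \<pi> k1 w) \<notin> LX"
    using lx k1 wV wnt unfolding lexdfs_order_def by blast
  have pc: "(p, c) \<in> R" using R_iff c by simp
  have pd: "(p, d) \<in> R" using R_iff d by simp
  have H1: "\<forall>u. (u,p) \<in> R\<^sup>* \<longrightarrow> u \<in> set (take k1 \<pi>)"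
  proof (intro allI impI)
    fix u assume u: "(u,p) \<in> R\<^sup>*"
    then have uc: "(u,c) \<in> R\<^sup>+" using pc by (meson rtrancl_into_trancl1)
    then have "u \<in> V" using R_V by blast
    then obtain k where k: "k < length \<pi>" "\<pi>!k = u" using good_pos[OF g] by blast
    have "k < k1" using good_anc[OF g k(1) k1(1)] uc k k1 by simp
    then show "u \<in> set (take k1 \<pi>)" using k by (auto simp: in_take_iff)
  qed
  have H2y: "\<forall>k<k1. E (\<pi>!k) c \<longrightarrow> (\<pi>!k, p) \<in> R\<^sup>*"
  proof (intro allI impI)
    fix k assume k: "k < k1" "E (\<pi>!k) c"
    have kl: "k < length \<pi>" using k k1 by simp
    from normalR[OF k(2)] show "(\<pi>!k, p) \<in> R\<^sup>*"
    proof
      assume "(\<pi>!k, c) \<in> R\<^sup>+"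
      then show ?thesis using R_last c by blast
    next
      assume "(c, \<pi>!k) \<in> R\<^sup>+"
      then have "k1 < k" using good_anc[OF g k1(1) kl] k1 by simp
      then show ?thesis using k by simp
    qed
  qed
  have pw: "(p, w) \<in> R\<^sup>*" using pd dw by (meson converse_rtrancl_into_rtrancl)
  have H2x: "\<forall>k<k1. E (\<pi>!k) w \<longrightarrow> (\<pi>!k, p) \<in> R\<^sup>*"
  proof (intro allI impI)
    fix k assume k: "k < k1" "E (\<pi>!k) w"
    have kl: "k < length \<pi>" using k k1 by simp
    have kw: "(\<pi>!k, w) \<in> R\<^sup>+"
    proof -
      from normalR[OF k(2)] show ?thesis
      proof
        assume "(w, \<pi>!k) \<in> R\<^sup>+"
        then have "l < k" using good_anc[OF g l(1) kl] l by simp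
        then show ?thesis using k k1l by simp
      qed
    qed
    then have kw': "(\<pi>!k, w) \<in> R\<^sup>*" by simp
    from chain[OF kw' pw] consider "\<pi>!k = p" | "(\<pi>!k, p) \<in> R\<^sup>+" | "(p, \<pi>!k) \<in> R\<^sup>+" by blast
    then show "(\<pi>!k, p) \<in> R\<^sup>*"
    proof cases
      case 1 then show ?thesis by simp
    next
      case 2 then show ?thesis by simp
    next
      case 3
      from chain[OF kw' dw] consider "\<pi>!k = d" | "(\<pi>!k, d) \<in> R\<^sup>+" | "(d, \<pi>!k) \<in> R\<^sup>+" by blast
      then show ?thesis
      proof cases
        case 1
        then have "k = k2" using nth_eq_iff_index_eq[OF dist kl k2(1)] k2 by simp
        then show ?thesis using k k12 by simp
      next
        case 2
        then have "(\<pi>!k, p) \<in> R\<^sup>*" using R_last d by blast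
        then have "(p, p) \<in> R\<^sup>+" using 3 by (meson trancl_rtrancl_trancl)
        then show ?thesis using R_irr by blast
      next
        case 3
        then have "k2 < k" using good_anc[OF g k2(1) kl] k2 by simp
        then show ?thesis using k k12 by simp
      qed
    qed
  qed
  have "(lex_label E s \<pi> k1 c, lex_label E s \<pi> k1 w) \<in> LX \<longleftrightarrow> Dom w c p"
    using lab_dom[OF g _ H1 H2x H2y ws c(2)] k1 by simp
  then show ?thesis using nl by simp
qed

end


context tr
begin

lemma rb_anc:
  assumes g: "good (rev \<beta>)" and m: "m < length \<beta>" and k: "k < length \<beta>" and r: "(\<beta>!m, \<beta>!k) \<in> R\<^sup>+"
  shows "k < m"
proof -
  have e1: "rev \<beta> ! (length \<beta> - Suc m) = \<beta>!m" using m by (simp add: rev_nth)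
  have e2: "rev \<beta> ! (length \<beta> - Suc k) = \<beta>!k" using k by (simp add: rev_nth)
  have "length \<beta> - Suc m < length \<beta> - Suc k"
    using good_anc[OF g, of "length \<beta> - Suc m" "length \<beta> - Suc k"] e1 e2 r m k by simp
  then show ?thesis by simp
qed

lemma S_anc:
  assumes g: "good (rev \<beta>)" and x: "x \<in> V" "x \<noteq> s" and e: "E v x" and pr: "prec \<beta> x v"
  shows "(v, par x) \<in> R\<^sup>*"
proof -
  obtain a b where ab: "a < b" "b < length \<beta>" "\<beta>!a = x" "\<beta>!b = v" using pr unfolding prec_def by blast
  from normalR[OF e] show ?thesis
  proof
    assume "(v, x) \<in> R\<^sup>+"
    then show ?thesis using R_last by blast
  next
    assume "(x, v) \<in> R\<^sup>+"
    then have "b < a" using rb_anc[OF g, of a b] ab by simp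
    then show ?thesis using ab by simp
  qed
qed

lemma S_iff:
  assumes g: "good (rev \<beta>)" and vp: "(v,p) \<in> R\<^sup>*" and y: "y \<in> V" "y \<noteq> s" "par y = p"
  shows "(E v y \<and> prec \<beta> y v) \<longleftrightarrow> E v y"
proof -
  have "(p, y) \<in> R" using R_iff y by simp
  then have vy: "(v, y) \<in> R\<^sup>+" using vp by (meson rtrancl_into_trancl1)
  have sb: "set \<beta> = V" using good_set[OF g] by simp
  have "v \<in> V" using R_V vy by blast
  then obtain b where b: "b < length \<beta>" "\<beta>!b = v" using sb by (metis in_set_conv_nth)
  obtain a where a: "a < length \<beta>" "\<beta>!a = y" using sb y by (metis in_set_conv_nth)
  have "a < b" using rb_anc[OF g b(1) a(1)] vy a b by simp
  then have "prec \<beta> y v" unfolding prec_def using a b by blast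
  then show ?thesis by simp
qed

lemma never_s:
  assumes g: "good (rev \<beta>)"
  shows "\<not> prec \<beta> s v"
proof
  assume "prec \<beta> s v"
  then obtain a b where ab: "a < b" "b < length \<beta>" "\<beta>!a = s" "\<beta>!b = v" unfolding prec_def by blast
  have d: "distinct \<beta>" using good_dist[OF g] by simp
  have l: "length \<beta> - 1 < length \<beta>" using ab by simp
  have z: "0 < length \<beta>" using ab by linarith
  have "rev \<beta> ! 0 = s" using good_s[OF g] .
  then have "\<beta> ! (length \<beta> - 1) = s" using rev_nth[OF z] by simp
  then have "a = length \<beta> - 1" using nth_eq_iff_index_eq[OF d _ l, of a] ab by simp
  then show False using ab by simp
qed

abbreviation SS where "SS \<beta> \<equiv> (\<lambda>v. {w. E v w \<and> prec \<beta> w v})"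

lemma classes_eq: "ordering_classes V E \<beta> = foldl (\<lambda>Qs v. refine Qs (SS \<beta> v)) [V] \<beta>"
  unfolding ordering_classes_def by simp

lemma dom_idx:
  assumes g: "good (rev \<beta>)" and c: "c \<in> V" "c \<noteq> s" "par c = p" and d: "d \<in> V" "d \<noteq> s" "par d = p"
    and D: "Dom d c p"
  shows "idx (ordering_classes V E \<beta>) d < idx (ordering_classes V E \<beta>) c"
proof -
  have sb: "set \<beta> = V" using good_set[OF g] by simp
  have dist: "distinct \<beta>" using good_dist[OF g] by simp
  obtain u where u: "(u,p) \<in> R\<^sup>*" "E u d" "\<not> E u c"
      "\<forall>u'. (u',p) \<in> R\<^sup>* \<and> (u,u') \<in> R\<^sup>+ \<longrightarrow> (E u' d \<longleftrightarrow> E u' c)" using D unfolding Dom_def by blast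
  have pV: "p \<in> V" using par_in c by auto
  have "u \<in> V" using rtr_V[OF u(1) pV] .
  then obtain k where k: "k < length \<beta>" "\<beta>!k = u" using sb by (metis in_set_conv_nth)
  have dS: "d \<in> SS \<beta> (\<beta>!k)" using S_iff[OF g u(1) d] u k by simp
  have cS: "c \<notin> SS \<beta> (\<beta>!k)" using u k by simp
  have same: "\<forall>m<k. (d \<in> SS \<beta> (\<beta>!m)) = (c \<in> SS \<beta> (\<beta>!m))"
  proof (intro allI impI)
    fix m assume m: "m < k"
    have ml: "m < length \<beta>" using m k by simp
    show "(d \<in> SS \<beta> (\<beta>!m)) = (c \<in> SS \<beta> (\<beta>!m))"
    proof (rule ccontr)
      assume ne: "(d \<in> SS \<beta> (\<beta>!m)) \<noteq> (c \<in> SS \<beta> (\<beta>!m))"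
      have vp: "(\<beta>!m, p) \<in> R\<^sup>*"
      proof (cases "d \<in> SS \<beta> (\<beta>!m)")
        case True
        then show ?thesis using S_anc[OF g d(1,2)] d(3) by auto
      next
        case False
        then have "c \<in> SS \<beta> (\<beta>!m)" using ne by blast
        then show ?thesis using S_anc[OF g c(1,2)] c(3) by auto
      qed
      have ne2: "E (\<beta>!m) d \<noteq> E (\<beta>!m) c"
        using ne S_iff[OF g vp d] S_iff[OF g vp c] by simp
      from chain[OF vp u(1)] consider "\<beta>!m = u" | "(\<beta>!m, u) \<in> R\<^sup>+" | "(u, \<beta>!m) \<in> R\<^sup>+" by blast
      then show False
      proof cases
        case 1
        then have "m = k" using nth_eq_iff_index_eq[OF dist ml k(1)] k by simp
        then show False using m by simp
      next
        case 2
        then have "k < m" using rb_anc[OF g ml k(1)] k by simp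
        then show False using m by simp
      next
        case 3
        then show False using u(4) vp ne2 by blast
      qed
    qed
  qed
  have "\<exists>k<length \<beta>. (\<forall>m<k. (d \<in> SS \<beta> (\<beta>!m)) = (c \<in> SS \<beta> (\<beta>!m))) \<and> d \<in> SS \<beta> (\<beta>!k) \<and> c \<notin> SS \<beta> (\<beta>!k)"
    using k(1) same dS cS by blast
  then show ?thesis unfolding classes_eq fold_idx[of V "SS \<beta>" \<beta>, rule_format, OF d(1) c(1)] .
qed

lemma class_sep:
  assumes g: "good (rev \<beta>)" and x: "x \<in> V" "x \<noteq> s"
  shows "\<forall>Q\<in>set (ordering_classes V E \<beta>). x \<in> Q \<longrightarrow> s \<notin> Q"
proof -
  let ?Qs = "ordering_classes V E \<beta>"
  have sb: "set \<beta> = V" using good_set[OF g] by simp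
  have pV: "par x \<in> V" using par_in x by simp
  then obtain k0 where k0: "k0 < length \<beta>" "\<beta>!k0 = par x" using sb by (metis in_set_conv_nth)
  have "x \<in> SS \<beta> (par x)" using S_iff[OF g _ x refl, of "par x"] par_E x by simp
  then have P0: "k0 < length \<beta> \<and> x \<in> SS \<beta> (\<beta>!k0)" using k0 by simp
  define k where "k = (LEAST k. k < length \<beta> \<and> x \<in> SS \<beta> (\<beta>!k))"
  have k: "k < length \<beta>" "x \<in> SS \<beta> (\<beta>!k)" using LeastI[of "\<lambda>k. k < length \<beta> \<and> x \<in> SS \<beta> (\<beta>!k)", OF P0] k_def by auto
  have same: "\<forall>m<k. (x \<in> SS \<beta> (\<beta>!m)) = (s \<in> SS \<beta> (\<beta>!m))"
  proof (intro allI impI)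
    fix m assume m: "m < k"
    then have "\<not> (m < length \<beta> \<and> x \<in> SS \<beta> (\<beta>!m))" unfolding k_def by (rule not_less_Least)
    then show "(x \<in> SS \<beta> (\<beta>!m)) = (s \<in> SS \<beta> (\<beta>!m))" using m k never_s[OF g] by auto
  qed
  have "s \<notin> SS \<beta> (\<beta>!k)" using never_s[OF g] by auto
  then have "\<exists>k<length \<beta>. (\<forall>m<k. (x \<in> SS \<beta> (\<beta>!m)) = (s \<in> SS \<beta> (\<beta>!m))) \<and> x \<in> SS \<beta> (\<beta>!k) \<and> s \<notin> SS \<beta> (\<beta>!k)"
    using k same by blast
  then have lt: "idx ?Qs x < idx ?Qs s" unfolding classes_eq fold_idx[of V "SS \<beta>" \<beta>, rule_format, OF x(1) sV] .
  have cx: "cnt ?Qs x \<le> 1" unfolding classes_eq using fold_cnt[where V=V and S="SS \<beta>" and bs=\<beta> and x=x] x(1) by simp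
  have cs: "cnt ?Qs s \<le> 1" unfolding classes_eq using fold_cnt[where V=V and S="SS \<beta>" and bs=\<beta> and x=s] sV by simp
  show ?thesis
  proof (intro ballI impI notI)
    fix Q assume Q: "Q \<in> set ?Qs" "x \<in> Q" "s \<in> Q"
    then obtain j where j: "j < length ?Qs" "?Qs ! j = Q" by (metis in_set_conv_nth)
    have "idx ?Qs x = j" using cnt_idx[OF cx j(1)] j Q by simp
    moreover have "idx ?Qs s = j" using cnt_idx[OF cs j(1)] j Q by simp
    ultimately show False using lt by simp
  qed
qed

lemma seq_lemma:
  assumes g: "good (rev \<beta>)" and c: "c \<in> V" "c \<noteq> s" and d: "d \<in> V" "d \<noteq> s"
    and pr: "prec (ordering_seq V E s \<rho> \<beta>) c d"
  shows "\<not> idx (ordering_classes V E \<beta>) d < idx (ordering_classes V E \<beta>) c"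
proof
  let ?Qs = "ordering_classes V E \<beta>"
  let ?A = "filter (\<lambda>Q. s \<in> Q) ?Qs" and ?B = "filter (\<lambda>Q. s \<notin> Q) ?Qs"
  let ?g = "\<lambda>Q. filter (\<lambda>x. x \<in> Q) (rev \<rho>)"
  assume lt: "idx ?Qs d < idx ?Qs c"
  have pr': "prec (concat (map ?g (?A @ ?B))) c d" using pr unfolding ordering_seq_def Let_def by simp
  have gs: "\<forall>Q. set (?g Q) \<subseteq> Q" by auto
  have "cnt (?A @ ?B) d = cnt ?Qs d" using cnt_filter2[of "\<lambda>Q. s \<in> Q" ?Qs d] by simp
  also have "\<dots> = 1" unfolding classes_eq using fold_cnt[where V=V and S="SS \<beta>" and bs=\<beta> and x=d] d(1) by simp
  finally have cd: "cnt (?A @ ?B) d \<le> 1" by simp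
  have le: "idx (?A @ ?B) c \<le> idx (?A @ ?B) d" using prec_concat_idx[OF pr' gs cd] .
  have sepc: "\<forall>Q\<in>set ?Qs. c \<in> Q \<longrightarrow> s \<notin> Q" using class_sep[OF g c] .
  have sepd: "\<forall>Q\<in>set ?Qs. d \<in> Q \<longrightarrow> s \<notin> Q" using class_sep[OF g d] .
  have cA: "c \<notin> \<Union>(set ?A)" using sepc by auto
  have dA: "d \<notin> \<Union>(set ?A)" using sepd by auto
  have e1: "idx (?A @ ?B) c = length ?A + idx ?B c" by (simp only: idx_append if_not_P[OF cA])
  have e2: "idx (?A @ ?B) d = length ?A + idx ?B d" by (simp only: idx_append if_not_P[OF dA])
  have "idx ?B c \<le> idx ?B d" using le unfolding e1 e2 by simp
  moreover have "idx ?B d < idx ?B c" using filter_idx[OF sepd lt] .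
  ultimately show False by simp
qed

lemma sigma_prec:
  assumes dp: "dfs_plus V TE \<tau> \<sigma>" and ls: "last \<tau> = s" and i: "0 < i" "i < length \<sigma>"
    and d: "d \<in> V" "d \<noteq> s" "par d = par (\<sigma>!i)" and dn: "d \<notin> set (take i \<sigma>)" and dc: "d \<noteq> \<sigma>!i"
  shows "prec \<tau> d (\<sigma>!i)"
proof -
  have df: "dfs_order V TE s \<sigma>" using dp ls unfolding dfs_plus_def by simp
  have g: "good \<sigma>" using dfs_good[OF df] .
  obtain j where j: "j < i" "TE (\<sigma>!j) (\<sigma>!i)" "\<forall>k. j < k \<and> k < i \<longrightarrow> {w. TE (\<sigma>!k) w} \<subseteq> set (take i \<sigma>)"
    using df i unfolding dfs_order_def by blast
  have "\<sigma>!j = par (\<sigma>!i)" using good_par[OF g j(1) i(2) j(2)] by simp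
  then have "TE (\<sigma>!j) d" using TE_iff d by simp
  note cl = dp[unfolded dfs_plus_def, THEN conjunct2, THEN conjunct2]
  have "d = \<sigma>!i \<or> prec \<tau> d (\<sigma>!i)"
    apply (rule cl[rule_format, of i j d])
    using i j dn \<open>TE (\<sigma>!j) d\<close> by blast
  then show ?thesis using dc by simp
qed

end


lemma greatest_prop:
  assumes "j0 < (i::nat)" "P j0"
  shows "(GREATEST j. j < i \<and> P j) < i \<and> P (GREATEST j. j < i \<and> P j) \<and>
    (\<forall>j. j < i \<and> P j \<longrightarrow> j \<le> (GREATEST j. j < i \<and> P j))"
proof -
  have m: "\<And>y. y < i \<and> P y \<Longrightarrow> y \<le> i" by simp
  have "(\<lambda>j. j < i \<and> P j) (GREATEST j. j < i \<and> P j)"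
    using GreatestI_nat[of "\<lambda>j. j < i \<and> P j" j0 i] assms m by blast
  moreover have "\<forall>j. j < i \<and> P j \<longrightarrow> j \<le> (GREATEST j. j < i \<and> P j)"
    using Greatest_le_nat[of "\<lambda>j. j < i \<and> P j" _ i] m by blast
  ultimately show ?thesis by simp
qed

lemma ltree_edgeI:
  assumes "i < length \<omega>" "j < i" "E (\<omega>!i) (\<omega>!j)" "\<forall>k. j < k \<and> k < i \<longrightarrow> \<not> E (\<omega>!i) (\<omega>!k)"
  shows "ltree_edge E \<omega> (\<omega>!i) (\<omega>!j) \<and> ltree_edge E \<omega> (\<omega>!j) (\<omega>!i)"
proof -
  have a: "((\<omega>!i = \<omega>!i \<and> \<omega>!j = \<omega>!j) \<or> (\<omega>!i = \<omega>!j \<and> \<omega>!j = \<omega>!i)) \<and> E (\<omega>!i) (\<omega>!j) \<and> (\<forall>k. j < k \<and> k < i \<longrightarrow> \<not> E (\<omega>!i) (\<omega>!k))"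
    using assms by simp
  have b: "((\<omega>!j = \<omega>!i \<and> \<omega>!i = \<omega>!j) \<or> (\<omega>!j = \<omega>!j \<and> \<omega>!i = \<omega>!i)) \<and> E (\<omega>!i) (\<omega>!j) \<and> (\<forall>k. j < k \<and> k < i \<longrightarrow> \<not> E (\<omega>!i) (\<omega>!k))"
    using assms by simp
  show ?thesis unfolding ltree_edge_def
  proof
    show "\<exists>i'<length \<omega>. \<exists>j'<i'. (\<omega>!i = \<omega>!i' \<and> \<omega>!j = \<omega>!j' \<or> \<omega>!i = \<omega>!j' \<and> \<omega>!j = \<omega>!i') \<and>
        E (\<omega>!i') (\<omega>!j') \<and> (\<forall>k. j' < k \<and> k < i' \<longrightarrow> \<not> E (\<omega>!i') (\<omega>!k))"
      using a assms(1,2) by blast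
    show "\<exists>i'<length \<omega>. \<exists>j'<i'. (\<omega>!j = \<omega>!i' \<and> \<omega>!i = \<omega>!j' \<or> \<omega>!j = \<omega>!j' \<and> \<omega>!i = \<omega>!i') \<and>
        E (\<omega>!i') (\<omega>!j') \<and> (\<forall>k. j' < k \<and> k < i' \<longrightarrow> \<not> E (\<omega>!i') (\<omega>!k))"
      using b assms(1,2) by blast
  qed
qed

context tr
begin

lemma ltree_good:
  assumes g: "good \<omega>"
  shows "ltree_edge E \<omega> = TE"
proof (intro ext iffI)
  fix x y
  have dist: "distinct \<omega>" using good_dist[OF g] .
  have sw: "set \<omega> = V" using good_set[OF g] .
  have nz: "\<And>i. 0 < i \<Longrightarrow> i < length \<omega> \<Longrightarrow> \<omega>!i \<noteq> s"
  proof
    fix i assume i: "0 < i" "i < length \<omega>" "\<omega>!i = s"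
    have z: "0 < length \<omega>" using i by linarith
    have "\<omega>!i = \<omega>!0" using i good_s[OF g] by simp
    then show False using nth_eq_iff_index_eq[OF dist i(2) z] i by simp
  qed
  have key: "\<And>i j. i < length \<omega> \<Longrightarrow> j < i \<Longrightarrow> E (\<omega>!i) (\<omega>!j) \<Longrightarrow>
      (\<forall>k. j < k \<and> k < i \<longrightarrow> \<not> E (\<omega>!i) (\<omega>!k)) \<Longrightarrow> \<omega>!i \<in> V \<and> \<omega>!i \<noteq> s \<and> \<omega>!j = par (\<omega>!i)"
  proof -
    fix i j assume i: "i < length \<omega>" and j: "j < i" and e: "E (\<omega>!i) (\<omega>!j)"
      and nb: "\<forall>k. j < k \<and> k < i \<longrightarrow> \<not> E (\<omega>!i) (\<omega>!k)"
    have jl: "j < length \<omega>" using i j by simp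
    have iV: "\<omega>!i \<in> V" using sw i by auto
    have ins: "\<omega>!i \<noteq> s" using nz[of i] i j by simp
    have e': "E (\<omega>!j) (\<omega>!i)" using e Eg by blast
    have ji: "(\<omega>!j, \<omega>!i) \<in> R\<^sup>+"
    proof -
      from normalR[OF e'] show ?thesis
      proof
        assume "(\<omega>!i, \<omega>!j) \<in> R\<^sup>+"
        then have "i < j" using good_anc[OF g i jl] by simp
        then show ?thesis using j by simp
      qed
    qed
    have pr: "(par (\<omega>!i), \<omega>!i) \<in> R" using R_iff iV ins by simp
    have pV: "par (\<omega>!i) \<in> V" using par_in iV ins by simp
    then obtain jp where jp: "jp < length \<omega>" "\<omega>!jp = par (\<omega>!i)" using good_pos[OF g pV] by blast
    have jpi: "jp < i" using good_anc[OF g jp(1) i] jp pr by auto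
    have jpar: "(\<omega>!j, par (\<omega>!i)) \<in> R\<^sup>*" using R_last[OF ji] by simp
    have "\<omega>!j = par (\<omega>!i)"
    proof (rule ccontr)
      assume ne: "\<omega>!j \<noteq> par (\<omega>!i)"
      then have "(\<omega>!j, \<omega>!jp) \<in> R\<^sup>+" using rtranclD[OF jpar] jp by auto
      then have "j < jp" using good_anc[OF g jl jp(1)] by simp
      moreover have "E (\<omega>!i) (\<omega>!jp)" using Eg[OF par_E[OF iV ins]] jp(2) by simp
      ultimately show False using nb jpi by blast
    qed
    then show "\<omega>!i \<in> V \<and> \<omega>!i \<noteq> s \<and> \<omega>!j = par (\<omega>!i)" using iV ins by simp
  qed
  {
    assume "ltree_edge E \<omega> x y"
    then obtain i j where ij: "i < length \<omega>" "j < i" "(x = \<omega>!i \<and> y = \<omega>!j) \<or> (x = \<omega>!j \<and> y = \<omega>!i)"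
      "E (\<omega>!i) (\<omega>!j)" "\<forall>k. j < k \<and> k < i \<longrightarrow> \<not> E (\<omega>!i) (\<omega>!k)" unfolding ltree_edge_def by blast
    have "\<omega>!i \<in> V \<and> \<omega>!i \<noteq> s \<and> \<omega>!j = par (\<omega>!i)" using key[OF ij(1,2,4,5)] .
    then have "TE (\<omega>!j) (\<omega>!i)" "TE (\<omega>!i) (\<omega>!j)" using TE_iff by simp_all
    then show "TE x y" using ij(3) by blast
  }
  {
    have rev: "ltree_edge E \<omega> (par v) v \<and> ltree_edge E \<omega> v (par v)" if v: "v \<in> V" "v \<noteq> s" for v
    proof -
      obtain i where i: "i < length \<omega>" "\<omega>!i = v" using good_pos[OF g v(1)] by blast
      have pr: "(par v, v) \<in> R" using R_iff v by simp
      have pV: "par v \<in> V" using par_in v by simp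
      then obtain j where j: "j < length \<omega>" "\<omega>!j = par v" using good_pos[OF g pV] by blast
      have ji: "j < i" using good_anc[OF g j(1) i(1)] i j pr by auto
      have e: "E (\<omega>!i) (\<omega>!j)" using Eg[OF par_E[OF v]] i j by simp
      have nb: "\<forall>k. j < k \<and> k < i \<longrightarrow> \<not> E (\<omega>!i) (\<omega>!k)"
      proof (intro allI impI notI)
        fix k assume k: "j < k \<and> k < i" and ek: "E (\<omega>!i) (\<omega>!k)"
        have kl: "k < length \<omega>" using k i by simp
        have ek': "E (\<omega>!k) (\<omega>!i)" using ek Eg by blast
        have ki: "(\<omega>!k, \<omega>!i) \<in> R\<^sup>+"
        proof -
          from normalR[OF ek'] show ?thesis
          proof
            assume "(\<omega>!i, \<omega>!k) \<in> R\<^sup>+"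
            then have "i < k" using good_anc[OF g i(1) kl] by simp
            then show ?thesis using k by simp
          qed
        qed
        have kp: "(\<omega>!k, par v) \<in> R\<^sup>*" using R_last[OF ki] i by simp
        then have "\<omega>!k = \<omega>!j \<or> (\<omega>!k, \<omega>!j) \<in> R\<^sup>+" using rtranclD[OF kp] j by auto
        then show False
        proof
          assume "\<omega>!k = \<omega>!j"
          then have "k = j" using nth_eq_iff_index_eq[OF dist kl j(1)] by simp
          then show False using k by simp
        next
          assume "(\<omega>!k, \<omega>!j) \<in> R\<^sup>+"
          then have "k < j" using good_anc[OF g kl j(1)] by simp
          then show False using k by simp
        qed
      qed
      show ?thesis using ltree_edgeI[where E=E and \<omega>=\<omega> and i=i and j=j, OF i(1) ji e nb] i j by simp
    qed
    assume "TE x y"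
    then have "(y \<in> V \<and> y \<noteq> s \<and> x = par y) \<or> (x \<in> V \<and> x \<noteq> s \<and> y = par x)" using TE_iff by simp
    then show "ltree_edge E \<omega> x y"
    proof
      assume "y \<in> V \<and> y \<noteq> s \<and> x = par y"
      then show ?thesis using rev[of y] by simp
    next
      assume "x \<in> V \<and> x \<noteq> s \<and> y = par x"
      then show ?thesis using rev[of x] by simp
    qed
  }
qed

lemma escape: "v \<in> V \<Longrightarrow> v \<notin> C \<Longrightarrow> s \<in> C \<Longrightarrow> \<exists>w\<in>V. w \<notin> C \<and> w \<noteq> s \<and> par w \<in> C"
proof (induction "h v" arbitrary: v rule: less_induct)
  case less
  have vs: "v \<noteq> s" using less.prems by blast
  show ?case
  proof (cases "par v \<in> C")
    case True
    then show ?thesis using less.prems vs by blast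
  next
    case False
    have "par v \<in> V" using par_in less.prems(1) vs by simp
    moreover have "h (par v) < h v" using h_par less.prems(1) vs by simp
    ultimately show ?thesis using less.hyps False less.prems(3) by blast
  qed
qed

lemma pi_good:
  assumes lx: "lexdfs_order V E s \<pi>" and lt: "ltree_edge E \<pi> = TE"
  shows "good \<pi>"
proof -
  have vo: "is_vorder V \<pi>" using lx unfolding lexdfs_order_def by blast
  have dist: "distinct \<pi>" and sp: "set \<pi> = V" using vo unfolding is_vorder_def by auto
  have ne: "\<pi> \<noteq> []" using sp sV by auto
  have z: "0 < length \<pi>" using ne by simp
  have p0: "\<pi>!0 = s"
  proof (rule ccontr)
    assume n: "\<pi>!0 \<noteq> s"
    have "(lex_label E s \<pi> 0 (\<pi>!0), lex_label E s \<pi> 0 s) \<notin> LX" using lx z sV unfolding lexdfs_order_def by simp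
    moreover have "lex_label E s \<pi> 0 (\<pi>!0) = []" "lex_label E s \<pi> 0 s = [0]" using n by (simp_all add: lex_label_def)
    ultimately show False by simp
  qed
  have hd: "hd \<pi> = s" using p0 ne by (simp add: hd_conv_nth)
  have nbr: "\<exists>j<i. TE (\<pi>!j) (\<pi>!i)" if i: "0 < i" "i < length \<pi>" for i
  proof -
    have iV: "\<pi>!i \<in> V" using sp i by auto
    have ins: "\<pi>!i \<noteq> s"
    proof
      assume "\<pi>!i = s"
      then have "\<pi>!i = \<pi>!0" using p0 by simp
      then show False using nth_eq_iff_index_eq[OF dist i(2) z] i by simp
    qed
    have "\<exists>j<i. E (\<pi>!j) (\<pi>!i)"
    proof (rule ccontr)
      assume nE: "\<not> (\<exists>j<i. E (\<pi>!j) (\<pi>!i))"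
      have l0: "lex_label E s \<pi> i (\<pi>!i) = []" using nE ins by (simp add: lex_label_def filter_empty_conv)
      have sC: "s \<in> set (take i \<pi>)" using p0 i z by (auto simp: in_take_iff intro!: exI[of _ 0])
      have nC: "\<pi>!i \<notin> set (take i \<pi>)" using nth_notin_take[OF dist i(2)] .
      obtain w where w: "w \<in> V" "w \<notin> set (take i \<pi>)" "w \<noteq> s" "par w \<in> set (take i \<pi>)"
        using escape[OF iV nC sC] by blast
      obtain k where k: "k < i" "k < length \<pi>" "\<pi>!k = par w" using w(4) by (auto simp: in_take_iff)
      have "E (\<pi>!k) w" using par_E w k by simp
      then have "filter (\<lambda>p. E (\<pi>!p) w) [0..<i] \<noteq> []" using k(1) by (auto simp: filter_empty_conv)
      then have "lex_label E s \<pi> i w \<noteq> []" using w(3) by (simp add: lex_label_def)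
      then have "([], lex_label E s \<pi> i w) \<in> LX" by (cases "lex_label E s \<pi> i w") auto
      moreover have "(lex_label E s \<pi> i (\<pi>!i), lex_label E s \<pi> i w) \<notin> LX"
        using lx i w(1,2) unfolding lexdfs_order_def by blast
      ultimately show False using l0 by simp
    qed
    then obtain j0 where j0: "j0 < i" "E (\<pi>!j0) (\<pi>!i)" by blast
    define j where "j = (GREATEST j. j < i \<and> E (\<pi>!j) (\<pi>!i))"
    have jp: "j < i" "E (\<pi>!j) (\<pi>!i)" "\<forall>j'. j' < i \<and> E (\<pi>!j') (\<pi>!i) \<longrightarrow> j' \<le> j"
      using greatest_prop[of j0 i "\<lambda>j. E (\<pi>!j) (\<pi>!i)", OF j0] unfolding j_def by auto
    have "ltree_edge E \<pi> (\<pi>!i) (\<pi>!j)"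
    proof -
      have "E (\<pi>!i) (\<pi>!j)" using jp(2) Eg by blast
      moreover have "\<forall>k. j < k \<and> k < i \<longrightarrow> \<not> E (\<pi>!i) (\<pi>!k)"
      proof (intro allI impI notI)
        fix k assume k: "j < k \<and> k < i" "E (\<pi>!i) (\<pi>!k)"
        then have "E (\<pi>!k) (\<pi>!i)" using Eg by blast
        then have "k \<le> j" using jp(3) k by blast
        then show False using k by simp
      qed
      ultimately show ?thesis unfolding ltree_edge_def using i jp(1) by blast
    qed
    then have "TE (\<pi>!i) (\<pi>!j)" using lt by simp
    then show ?thesis using TE_sym jp(1) by blast
  qed
  show ?thesis unfolding good_def using vo ne hd nbr by blast
qed

end


context tr
begin

lemma main_fwd:
  assumes gp: "good \<pi>" and lx: "lexdfs_order V E s \<pi>" and df: "dfs_order V TE s \<sigma>"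
    and sib: "\<And>i d. 0 < i \<Longrightarrow> i < length \<sigma> \<Longrightarrow> d \<in> V \<Longrightarrow> d \<noteq> s \<Longrightarrow> par d = par (\<sigma>!i) \<Longrightarrow>
      d \<notin> set (take i \<sigma>) \<Longrightarrow> d \<noteq> \<sigma>!i \<Longrightarrow> \<not> Dom d (\<sigma>!i) (par (\<sigma>!i))"
  shows "lexdfs_order V E s \<sigma>"
proof -
  have g: "good \<sigma>" using dfs_good[OF df] .
  have vo: "is_vorder V \<sigma>" using df unfolding dfs_order_def by blast
  have dist: "distinct \<sigma>" using good_dist[OF g] .
  have sw: "set \<sigma> = V" using good_set[OF g] .
  have "(lex_label E s \<sigma> i (\<sigma>!i), lex_label E s \<sigma> i w) \<notin> LX"
    if i: "i < length \<sigma>" and w: "w \<in> V" "w \<notin> set (take i \<sigma>)" for i w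
  proof (cases "i = 0")
    case True
    have s0: "\<sigma>!0 = s" using good_s[OF g] .
    show ?thesis
    proof (cases "w = s")
      case True
      then show ?thesis using \<open>i = 0\<close> s0 lex_irr by simp
    next
      case False
      then show ?thesis using \<open>i = 0\<close> s0 by (simp add: lex_label_def)
    qed
  next
    case False
    then have i0: "0 < i" by simp
    define c where "c = \<sigma>!i"
    define p where "p = par c"
    define LL where "LL = lex_label E s \<sigma> i"
    have z: "0 < length \<sigma>" using i by linarith
    have cV: "c \<in> V" using sw i c_def by auto
    have cs: "c \<noteq> s"
    proof
      assume "c = s"
      then have "\<sigma>!i = \<sigma>!0" using good_s[OF g] c_def by simp
      then show False using nth_eq_iff_index_eq[OF dist i z] i0 by simp
    qed
    have cn: "c \<notin> set (take i \<sigma>)" using nth_notin_take[OF dist i] c_def by simp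
    have sin: "s \<in> set (take i \<sigma>)" using good_s[OF g] i0 z by (auto simp: in_take_iff intro!: exI[of _ 0])
    have ws: "w \<noteq> s" using w sin by blast
    have H1: "\<forall>u. (u,p) \<in> R\<^sup>* \<longrightarrow> u \<in> set (take i \<sigma>)" using sigma_H1[OF g i0 i] p_def c_def by simp
    have H2: "\<forall>k<i. E (\<sigma>!k) x \<longrightarrow> (\<sigma>!k, p) \<in> R\<^sup>*" if "x \<in> V" "x \<notin> set (take i \<sigma>)" for x
      using sigma_nbrs[OF df i0 i that] p_def c_def by simp
    have K: "(LL y, LL x) \<in> LX \<longleftrightarrow> Dom x y p"
      if "x \<in> V" "x \<notin> set (take i \<sigma>)" "x \<noteq> s" "y \<in> V" "y \<notin> set (take i \<sigma>)" "y \<noteq> s" for x y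
      using lab_dom[OF g _ H1 H2[OF that(1,2)] H2[OF that(4,5)] that(3) that(6)] i LL_def by simp
    have pc: "(p, c) \<in> R" using R_iff cV cs p_def by simp
    show ?thesis
    proof (cases "w = c")
      case True
      then show ?thesis using lex_irr c_def by simp
    next
      case wc: False
      have goal: "\<not> Dom w c p \<Longrightarrow> (LL c, LL w) \<notin> LX" using K[OF w ws cV cn cs] by simp
      show ?thesis unfolding c_def[symmetric] LL_def[symmetric]
      proof (cases "(p, w) \<in> R\<^sup>+")
        case False
        have "Dom c w p"
          unfolding Dom_def
        proof (intro exI[of _ p] conjI allI impI)
          show "(p,p) \<in> R\<^sup>*" by simp
          show "E p c" using par_E cV cs p_def by simp
          show "\<not> E p w"
          proof
            assume "E p w"
            from normalR[OF this] show False
            proof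
              assume "(p, w) \<in> R\<^sup>+" then show False using False by simp
            next
              assume "(w, p) \<in> R\<^sup>+"
              then have wc': "(w, c) \<in> R\<^sup>+" using pc by (meson trancl.trancl_into_trancl)
              obtain l where l: "l < length \<sigma>" "\<sigma>!l = w" using good_pos[OF g w(1)] by blast
              have "l < i" using good_anc[OF g l(1) i] wc' l c_def by simp
              then have "w \<in> set (take i \<sigma>)" using l by (auto simp: in_take_iff intro!: exI[of _ l])
              then show False using w by simp
            qed
          qed
          fix u' assume u': "(u', p) \<in> R\<^sup>* \<and> (p, u') \<in> R\<^sup>+"
          then have "(p,p) \<in> R\<^sup>+" by (meson trancl_rtrancl_trancl)
          then show "E u' c \<longleftrightarrow> E u' w" using R_irr by simp
        qed
        then have "(LL w, LL c) \<in> LX" using K[OF cV cn cs w ws] by simp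
        then show "(LL c, LL w) \<notin> LX" using lex_asym by blast
      next
        case True
        obtain d where d: "(p,d) \<in> R" "(d,w) \<in> R\<^sup>*" using R_first[OF True] by blast
        have dV: "d \<in> V" and ds: "d \<noteq> s" and pd: "par d = p" using d(1) R_iff by auto
        have dn: "d \<notin> set (take i \<sigma>)"
        proof
          assume din: "d \<in> set (take i \<sigma>)"
          have "d \<noteq> w" using din w by blast
          then have "(d,w) \<in> R\<^sup>+" using rtranclD[OF d(2)] by simp
          then have "(d, \<sigma>!i) \<in> R\<^sup>+" using finished[OF df i din _ w(2)] by blast
          then have "(d, p) \<in> R\<^sup>*" using R_last c_def p_def by blast
          then have "(p, p) \<in> R\<^sup>+" using d(1) by (meson rtrancl_into_trancl2)
          then show False using R_irr by simp
        qed
        obtain k1 where k1: "k1 < length \<pi>" "\<pi>!k1 = c" using good_pos[OF gp cV] by blast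
        obtain k2 where k2: "k2 < length \<pi>" "\<pi>!k2 = d" using good_pos[OF gp dV] by blast
        have pcc: "par c = p" using p_def by simp
        show "(LL c, LL w) \<notin> LX"
        proof (cases "d = c")
          case True
          have "\<not> Dom w c p" using pi_side[OF gp lx cV cs pcc cV cs pcc k1 k1 order_refl] d(2) True wc by simp
          then show ?thesis using goal by simp
        next
          case dc: False
          show ?thesis
          proof (cases "k1 \<le> k2")
            case True
            have "\<not> Dom w c p" using pi_side[OF gp lx cV cs pcc dV ds pd k1 k2 True d(2) wc] .
            then show ?thesis using goal by simp
          next
            case False
            have "\<not> Dom d c p" using sib[OF i0 i dV ds] pd p_def c_def dn dc by simp
            then have cd: "(LL c, LL d) \<notin> LX" using K[OF dV dn ds cV cn cs] by simp
            show ?thesis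
            proof (cases "w = d")
              case True
              then show ?thesis using cd by simp
            next
              case wd: False
              have "\<not> Dom w d p" using pi_side[OF gp lx dV ds pd dV ds pd k2 k2 order_refl d(2) wd] .
              then have "(LL d, LL w) \<notin> LX" using K[OF w ws dV dn ds] by simp
              then show ?thesis using lex_tr3 cd by blast
            qed
          qed
        qed
      qed
    qed
  qed
  then show ?thesis unfolding lexdfs_order_def using vo by blast
qed

end


lemma build:
  assumes gr: "graph V E" and df: "dfs_order V E s \<pi>0" and lt: "ltree_edge E \<pi>0 = TE"
  shows "\<exists>par h. tr V E TE s par h"
proof -
  have vo: "is_vorder V \<pi>0" and ne: "\<pi>0 \<noteq> []" and hd0: "hd \<pi>0 = s" using df unfolding dfs_order_def by auto
  have dist: "distinct \<pi>0" and sp: "set \<pi>0 = V" using vo unfolding is_vorder_def by auto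
  have z: "0 < length \<pi>0" using ne by simp
  have p0: "\<pi>0!0 = s" using hd0 ne by (simp add: hd_conv_nth)
  have sV: "s \<in> V" using p0 sp z nth_mem by metis
  have Eg: "\<And>x y. E x y \<Longrightarrow> x \<in> V \<and> y \<in> V \<and> x \<noteq> y \<and> E y x" using gr unfolding graph_def by blast
  define hh where "hh v = (THE k. k < length \<pi>0 \<and> \<pi>0!k = v)" for v
  have hh_nth: "hh (\<pi>0!k) = k" if k: "k < length \<pi>0" for k
    unfolding hh_def
  proof (rule the_equality)
    show "k < length \<pi>0 \<and> \<pi>0!k = \<pi>0!k" using k by simp
    fix k' assume "k' < length \<pi>0 \<and> \<pi>0!k' = \<pi>0!k"
    then show "k' = k" using nth_eq_iff_index_eq[OF dist _ k] by blast
  qed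
  have hh: "hh v < length \<pi>0 \<and> \<pi>0!(hh v) = v" if v: "v \<in> V" for v
  proof -
    obtain k where k: "k < length \<pi>0" "\<pi>0!k = v" using v sp by (auto simp: in_set_conv_nth)
    then show ?thesis using hh_nth[OF k(1)] by simp
  qed
  have nz: "\<pi>0!i \<noteq> s" if i: "0 < i" "i < length \<pi>0" for i
  proof
    assume "\<pi>0!i = s"
    then have "\<pi>0!i = \<pi>0!0" using p0 by simp
    then show False using nth_eq_iff_index_eq[OF dist i(2) z] i by simp
  qed
  define Jf where "Jf i = (GREATEST j. j < i \<and> E (\<pi>0!j) (\<pi>0!i))" for i
  have Jf: "Jf i < i \<and> E (\<pi>0!Jf i) (\<pi>0!i) \<and> (\<forall>j. j < i \<and> E (\<pi>0!j) (\<pi>0!i) \<longrightarrow> j \<le> Jf i)"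
    if i: "0 < i" "i < length \<pi>0" for i
  proof -
    obtain j where j: "j < i" "E (\<pi>0!j) (\<pi>0!i)" using df i unfolding dfs_order_def by blast
    show ?thesis using greatest_prop[of j i "\<lambda>j. E (\<pi>0!j) (\<pi>0!i)", OF j] unfolding Jf_def by blast
  qed
  define pp where "pp v = \<pi>0 ! Jf (hh v)" for v
  have hpos: "0 < hh v" if v: "v \<in> V" "v \<noteq> s" for v
  proof (rule ccontr)
    assume "\<not> 0 < hh v"
    then have "hh v = 0" by simp
    then show False using hh[OF v(1)] p0 v(2) by simp
  qed
  have edge_iff: "(E (\<pi>0!i) (\<pi>0!j) \<and> (\<forall>k. j < k \<and> k < i \<longrightarrow> \<not> E (\<pi>0!i) (\<pi>0!k))) \<longleftrightarrow> j = Jf i"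
    if i: "i < length \<pi>0" and j: "j < i" for i j
  proof
    assume a: "E (\<pi>0!i) (\<pi>0!j) \<and> (\<forall>k. j < k \<and> k < i \<longrightarrow> \<not> E (\<pi>0!i) (\<pi>0!k))"
    have i0: "0 < i" using j by simp
    have "j \<le> Jf i" using Jf[OF i0 i] a j Eg by blast
    moreover have "\<not> j < Jf i"
    proof
      assume "j < Jf i"
      moreover have "E (\<pi>0!i) (\<pi>0!Jf i)" using Jf[OF i0 i] Eg by blast
      ultimately show False using a Jf[OF i0 i] by blast
    qed
    ultimately show "j = Jf i" by simp
  next
    assume "j = Jf i"
    moreover have i0: "0 < i" using j by simp
    ultimately show "E (\<pi>0!i) (\<pi>0!j) \<and> (\<forall>k. j < k \<and> k < i \<longrightarrow> \<not> E (\<pi>0!i) (\<pi>0!k))"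
      using Jf[OF i0 i] Eg by (meson leD)
  qed
  have lt_iff: "ltree_edge E \<pi>0 x y \<longleftrightarrow> (\<exists>i. 0 < i \<and> i < length \<pi>0 \<and> ((x = \<pi>0!i \<and> y = \<pi>0!Jf i) \<or> (x = \<pi>0!Jf i \<and> y = \<pi>0!i)))"
    for x y
  proof
    assume "ltree_edge E \<pi>0 x y"
    then obtain i j where ij: "i < length \<pi>0" "j < i" "(x = \<pi>0!i \<and> y = \<pi>0!j) \<or> (x = \<pi>0!j \<and> y = \<pi>0!i)"
      "E (\<pi>0!i) (\<pi>0!j)" "\<forall>k. j < k \<and> k < i \<longrightarrow> \<not> E (\<pi>0!i) (\<pi>0!k)" unfolding ltree_edge_def by blast
    have "j = Jf i" using edge_iff[OF ij(1,2)] ij(4,5) by blast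
    then show "\<exists>i. 0 < i \<and> i < length \<pi>0 \<and> ((x = \<pi>0!i \<and> y = \<pi>0!Jf i) \<or> (x = \<pi>0!Jf i \<and> y = \<pi>0!i))"
      using ij by (intro exI[of _ i]) auto
  next
    assume "\<exists>i. 0 < i \<and> i < length \<pi>0 \<and> ((x = \<pi>0!i \<and> y = \<pi>0!Jf i) \<or> (x = \<pi>0!Jf i \<and> y = \<pi>0!i))"
    then obtain i where i: "0 < i" "i < length \<pi>0" "(x = \<pi>0!i \<and> y = \<pi>0!Jf i) \<or> (x = \<pi>0!Jf i \<and> y = \<pi>0!i)" by blast
    have j: "Jf i < i" using Jf[OF i(1,2)] by simp
    have e: "E (\<pi>0!i) (\<pi>0!Jf i) \<and> (\<forall>k. Jf i < k \<and> k < i \<longrightarrow> \<not> E (\<pi>0!i) (\<pi>0!k))"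
      using edge_iff[OF i(2) j] by simp
    have "ltree_edge E \<pi>0 (\<pi>0!i) (\<pi>0!Jf i) \<and> ltree_edge E \<pi>0 (\<pi>0!Jf i) (\<pi>0!i)"
      using ltree_edgeI[where E=E and \<omega>=\<pi>0 and i=i and j="Jf i", OF i(2) j] e by blast
    then show "ltree_edge E \<pi>0 x y" using i(3) by blast
  qed
  have pp_nth: "pp (\<pi>0!i) = \<pi>0!Jf i" if "i < length \<pi>0" for i
    using hh_nth[OF that] pp_def by simp
  let ?R = "{(pp v, v) | v. v \<in> V \<and> v \<noteq> s}"
  have disc: "\<forall>i j. 0 < i \<and> i < length \<pi>0 \<and> j < i \<and> E (\<pi>0!j) (\<pi>0!i) \<and>
       (\<forall>k. j < k \<and> k < i \<longrightarrow> {w. E (\<pi>0!k) w} \<subseteq> set (take i \<pi>0)) \<longrightarrow> (\<pi>0!j, \<pi>0!i) \<in> ?R"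
  proof (intro allI impI)
    fix i j assume a: "0 < i \<and> i < length \<pi>0 \<and> j < i \<and> E (\<pi>0!j) (\<pi>0!i) \<and>
       (\<forall>k. j < k \<and> k < i \<longrightarrow> {w. E (\<pi>0!k) w} \<subseteq> set (take i \<pi>0))"
    have "\<forall>k. j < k \<and> k < i \<longrightarrow> \<not> E (\<pi>0!i) (\<pi>0!k)"
    proof (intro allI impI notI)
      fix k assume k: "j < k \<and> k < i" "E (\<pi>0!i) (\<pi>0!k)"
      then have "\<pi>0!i \<in> set (take i \<pi>0)" using a Eg by blast
      then show False using nth_notin_take[OF dist] a by blast
    qed
    moreover have "E (\<pi>0!i) (\<pi>0!j)" using a Eg by blast
    ultimately have "j = Jf i" using edge_iff a by blast
    then have "\<pi>0!j = pp (\<pi>0!i)" using pp_nth a by simp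
    moreover have "\<pi>0!i \<in> V" using a sp by auto
    moreover have "\<pi>0!i \<noteq> s" using nz a by blast
    ultimately show "(\<pi>0!j, \<pi>0!i) \<in> ?R" by blast
  qed
  have Pb: "\<And>a b. b < length \<pi>0 \<Longrightarrow> a < b \<Longrightarrow> (\<pi>0!a, \<pi>0!b) \<in> ?R\<^sup>+ \<or> {w. E (\<pi>0!a) w} \<subseteq> set (take b \<pi>0)"
    using dfs_Pb[OF df disc] by blast
  have "tr V E TE s pp hh"
  proof (rule tr.intro)
    fix x y assume "E x y" then show "x \<in> V \<and> y \<in> V \<and> x \<noteq> y \<and> E y x" using Eg by blast
  next
    show "s \<in> V" by (rule sV)
  next
    fix v assume v: "v \<in> V" "v \<noteq> s"
    have "Jf (hh v) < hh v" using Jf[OF hpos[OF v]] hh[OF v(1)] by simp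
    then show "pp v \<in> V" using hh[OF v(1)] sp pp_def by (metis nth_mem order.strict_trans)
  next
    fix v assume v: "v \<in> V" "v \<noteq> s"
    show "E (pp v) v" using Jf[OF hpos[OF v]] hh[OF v(1)] pp_def by simp
  next
    fix v assume v: "v \<in> V" "v \<noteq> s"
    have "Jf (hh v) < hh v" using Jf[OF hpos[OF v]] hh[OF v(1)] by simp
    moreover have "hh (pp v) = Jf (hh v)" using hh_nth hh[OF v(1)] pp_def calculation by (metis order.strict_trans)
    ultimately show "hh (pp v) < hh v" by simp
  next
    fix x y
    have "TE x y \<longleftrightarrow> (\<exists>i. 0 < i \<and> i < length \<pi>0 \<and> ((x = \<pi>0!i \<and> y = \<pi>0!Jf i) \<or> (x = \<pi>0!Jf i \<and> y = \<pi>0!i)))"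
      using lt_iff lt by simp
    also have "\<dots> \<longleftrightarrow> (y \<in> V \<and> y \<noteq> s \<and> x = pp y) \<or> (x \<in> V \<and> x \<noteq> s \<and> y = pp x)"
    proof
      assume "\<exists>i. 0 < i \<and> i < length \<pi>0 \<and> ((x = \<pi>0!i \<and> y = \<pi>0!Jf i) \<or> (x = \<pi>0!Jf i \<and> y = \<pi>0!i))"
      then obtain i where i: "0 < i" "i < length \<pi>0" "(x = \<pi>0!i \<and> y = \<pi>0!Jf i) \<or> (x = \<pi>0!Jf i \<and> y = \<pi>0!i)" by blast
      have "\<pi>0!i \<in> V" using i sp by auto
      moreover have "\<pi>0!i \<noteq> s" using nz i by blast
      moreover have "pp (\<pi>0!i) = \<pi>0!Jf i" using pp_nth i by simp
      ultimately show "(y \<in> V \<and> y \<noteq> s \<and> x = pp y) \<or> (x \<in> V \<and> x \<noteq> s \<and> y = pp x)" using i(3) by auto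
    next
      assume "(y \<in> V \<and> y \<noteq> s \<and> x = pp y) \<or> (x \<in> V \<and> x \<noteq> s \<and> y = pp x)"
      then show "\<exists>i. 0 < i \<and> i < length \<pi>0 \<and> ((x = \<pi>0!i \<and> y = \<pi>0!Jf i) \<or> (x = \<pi>0!Jf i \<and> y = \<pi>0!i))"
      proof
        assume a: "y \<in> V \<and> y \<noteq> s \<and> x = pp y"
        then have "0 < hh y" "hh y < length \<pi>0" "\<pi>0!(hh y) = y" using hpos hh by auto
        then show ?thesis using a pp_def by (intro exI[of _ "hh y"]) auto
      next
        assume a: "x \<in> V \<and> x \<noteq> s \<and> y = pp x"
        then have "0 < hh x" "hh x < length \<pi>0" "\<pi>0!(hh x) = x" using hpos hh by auto
        then show ?thesis using a pp_def by (intro exI[of _ "hh x"]) auto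
      qed
    qed
    finally show "TE x y \<longleftrightarrow> (y \<in> V \<and> y \<noteq> s \<and> x = pp y) \<or> (x \<in> V \<and> x \<noteq> s \<and> y = pp x)" .
  next
    fix x y assume e: "E x y"
    have xV: "x \<in> V" and yV: "y \<in> V" and xy: "x \<noteq> y" and e': "E y x" using Eg[OF e] by auto
    obtain a where a: "a < length \<pi>0" "\<pi>0!a = x" using hh[OF xV] by blast
    obtain b where b: "b < length \<pi>0" "\<pi>0!b = y" using hh[OF yV] by blast
    have "a \<noteq> b" using a b xy by auto
    then consider "a < b" | "b < a" by linarith
    then show "(x, y) \<in> ?R\<^sup>+ \<or> (y, x) \<in> ?R\<^sup>+"
    proof cases
      case 1
      have "y \<notin> set (take b \<pi>0)" using nth_notin_take[OF dist b(1)] b by simp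
      then have "\<not> {w. E x w} \<subseteq> set (take b \<pi>0)" using e by blast
      then show ?thesis using Pb[OF b(1) 1] a b by simp
    next
      case 2
      have "x \<notin> set (take a \<pi>0)" using nth_notin_take[OF dist a(1)] a by simp
      then have "\<not> {w. E y w} \<subseteq> set (take a \<pi>0)" using e' by blast
      then show ?thesis using Pb[OF a(1) 2] a b by simp
    qed
  qed
  then show ?thesis by blast
qed

lemma seq_hd:
  assumes sV: "s \<in> V" and rn: "\<rho> \<noteq> []" and rl: "last \<rho> = s"
  shows "ordering_seq V E s \<rho> \<beta> \<noteq> [] \<and> hd (ordering_seq V E s \<rho> \<beta>) = s"
proof -
  let ?Qs = "ordering_classes V E \<beta>"
  have U: "\<Union>(set ?Qs) = V" unfolding ordering_classes_def
    using fold_props[where S="\<lambda>v. {w. E v w \<and> prec \<beta> w v}" and V=V and bs=\<beta>] by simp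
  then obtain Q where Q: "Q \<in> set ?Qs" "s \<in> Q" using sV by blast
  then have "filter (\<lambda>Q. s \<in> Q) ?Qs \<noteq> []" by (auto simp: filter_empty_conv)
  then obtain Q1 rest where f: "filter (\<lambda>Q. s \<in> Q) ?Qs = Q1 # rest" by (cases "filter (\<lambda>Q. s \<in> Q) ?Qs") auto
  have "Q1 \<in> set (filter (\<lambda>Q. s \<in> Q) ?Qs)" using f by simp
  then have sQ1: "s \<in> Q1" by simp
  have r: "rev \<rho> = s # rev (butlast \<rho>)" using append_butlast_last_id[OF rn] rl
    by (metis rev.simps(2) rev_rev_ident)
  have "filter (\<lambda>x. x \<in> Q1) (rev \<rho>) = s # filter (\<lambda>x. x \<in> Q1) (rev (butlast \<rho>))" unfolding r using sQ1 by simp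
  then show ?thesis unfolding ordering_seq_def Let_def f by simp
qed

theorem theorem7:
  fixes V :: "'a set" and E TE :: "'a \<Rightarrow> 'a \<Rightarrow> bool" and s :: 'a and \<rho> \<sigma> :: "'a list"
  assumes "graph V E" and "connected V E" and "s \<in> V"
    and "is_Ltree_DFS V E TE s"
    and "is_vorder V \<rho>" and "\<rho> \<noteq> []" and "last \<rho> = s"
    and "ordering_output V E TE s \<rho> \<sigma>"
  shows "is_Ltree_LexDFS V E TE s \<longleftrightarrow> (\<exists>t\<in>V. lexdfs_order V E t \<sigma>)"
proof -
  obtain \<pi>0 where df0: "dfs_order V E s \<pi>0" and lt0: "ltree_edge E \<pi>0 = TE"
    using assms(4) unfolding is_Ltree_DFS_def by blast
  obtain par h where T: "tr V E TE s par h" using build[OF assms(1) df0 lt0] by blast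
  interpret tr V E TE s par h by (rule T)
  obtain \<beta> where bf: "bfs_order V TE s (rev \<beta>)" and dp: "dfs_plus V TE (rev (ordering_seq V E s \<rho> \<beta>)) \<sigma>"
    using assms(8) unfolding ordering_output_def by blast
  have gb: "good (rev \<beta>)" using bf unfolding bfs_order_def good_def by blast
  have sh: "ordering_seq V E s \<rho> \<beta> \<noteq> [] \<and> hd (ordering_seq V E s \<rho> \<beta>) = s"
    using seq_hd[OF assms(3,6,7)] .
  have ls: "last (rev (ordering_seq V E s \<rho> \<beta>)) = s" using sh by (simp add: last_rev)
  have df: "dfs_order V TE s \<sigma>" using dp ls unfolding dfs_plus_def by simp
  have gs: "good \<sigma>" using dfs_good[OF df] .
  show ?thesis
  proof
    assume "is_Ltree_LexDFS V E TE s"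
    then obtain \<pi> where lx: "lexdfs_order V E s \<pi>" and lt: "ltree_edge E \<pi> = TE"
      unfolding is_Ltree_LexDFS_def by blast
    have gp: "good \<pi>" using pi_good[OF lx lt] .
    have "lexdfs_order V E s \<sigma>"
    proof (rule main_fwd[OF gp lx df])
      fix i d assume i0: "0 < i" and i: "i < length \<sigma>" and dV: "d \<in> V" and ds: "d \<noteq> s"
        and pd: "par d = par (\<sigma>!i)" and dn: "d \<notin> set (take i \<sigma>)" and dc: "d \<noteq> \<sigma>!i"
      show "\<not> Dom d (\<sigma>!i) (par (\<sigma>!i))"
      proof
        assume D: "Dom d (\<sigma>!i) (par (\<sigma>!i))"
        have cV: "\<sigma>!i \<in> V" using good_set[OF gs] i by auto
        have cs: "\<sigma>!i \<noteq> s"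
        proof
          assume "\<sigma>!i = s"
          then have "\<sigma>!i = \<sigma>!0" using good_s[OF gs] by simp
          moreover have z: "0 < length \<sigma>" using i by linarith
          ultimately show False using nth_eq_iff_index_eq[OF good_dist[OF gs] i z] i0 by simp
        qed
        have lt1: "idx (ordering_classes V E \<beta>) d < idx (ordering_classes V E \<beta>) (\<sigma>!i)"
          using dom_idx[OF gb cV cs refl dV ds pd D] .
        have "prec (rev (ordering_seq V E s \<rho> \<beta>)) d (\<sigma>!i)"
          using sigma_prec[OF dp ls i0 i dV ds pd dn dc] .
        then have "prec (ordering_seq V E s \<rho> \<beta>) (\<sigma>!i) d" using prec_rev by metis
        then have "\<not> idx (ordering_classes V E \<beta>) d < idx (ordering_classes V E \<beta>) (\<sigma>!i)"
          using seq_lemma[OF gb cV cs dV ds] by blast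
        then show False using lt1 by simp
      qed
    qed
    then show "\<exists>t\<in>V. lexdfs_order V E t \<sigma>" using assms(3) by blast
  next
    assume "\<exists>t\<in>V. lexdfs_order V E t \<sigma>"
    then obtain t where tV: "t \<in> V" and lxt: "lexdfs_order V E t \<sigma>" by blast
    have z: "0 < length \<sigma>" using good_set[OF gs] assms(3) by (cases \<sigma>) auto
    have ts: "t = s"
    proof (rule ccontr)
      assume nt: "t \<noteq> s"
      have "(lex_label E t \<sigma> 0 (\<sigma>!0), lex_label E t \<sigma> 0 t) \<notin> LX"
        using lxt z tV unfolding lexdfs_order_def by simp
      moreover have "lex_label E t \<sigma> 0 (\<sigma>!0) = []" using good_s[OF gs] nt by (simp add: lex_label_def)
      moreover have "lex_label E t \<sigma> 0 t = [0]" by (simp add: lex_label_def)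
      ultimately show False by simp
    qed
    show "is_Ltree_LexDFS V E TE s"
      unfolding is_Ltree_LexDFS_def using lxt ts ltree_good[OF gs] by blast
  qed
qed


end
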